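(* Let $m_0$ be a positive integer with the covering property. There exists $\zeta_3>0$, not depending on $d$, such that if $0\le\zeta<\zeta_3$, then there is a random vector $\mathbf x_\infty\in\mathbb R^d$ such that: (1) there exist positive constants $C_1,\Lambda_1$ satisfying $\mathbb E\,\mathcal D(\mathfrak x^l_n)\le C_1\mathbb E\,\mathcal D(\mathfrak x^l_0)e^{-\Lambda_1 n}$ for all $n\ge0$, $1\le l\le d$, and moreover $$\mathbb E\|\mathbf x^i_n-\mathbf x_\infty\|_1\le\frac{d(\gamma+\sqrt N\zeta)C_1\max_{1\le l\le d}\mathbb E\,\mathcal D(\mathfrak x^l_0)}{1-e^{-\Lambda_1}}\,e^{-\Lambda_1 n},\qquad n\ge0,\ i\in\mathcal N;$$ (2) there exist a positive constant $\Lambda_2$ and an almost surely finite positive random variable $C_3$ such that almost surely $\|\mathbf x^i_n-\mathbf x_\infty\|_1\le C_3e^{-\Lambda_2 n}$ for all $n\ge0$ and $i\in\mathcal N$.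
   Context: Setting (random batch CBO). Fix integers $N\ge2$, $d\ge1$, batch size $P\ge2$, drift $\gamma\in(0,1)$, noise level $\zeta\ge0$; $\mathcal N=\{1,\dots,N\}$. Weight functions $\omega_{S,j}:(\mathbb R^d)^N\to[0,\infty)$ for nonempty $S\subseteq\mathcal N$, $j\in\mathcal N$, with $\sum_{j\in S}\omega_{S,j}=1$ and $\omega_{S,j}=0$ for $j\notin S$. $\mathcal A$ is the set of partitions of $\mathcal N$ into $\lceil N/P\rceil$ batches, all of size $P$ except possibly one of size at most $P$; $(\mathcal B^n)_{n\ge0}$ i.i.d. uniform on $\mathcal A$; $[i]_n$ is the batch of $\mathcal B^n$ containing $i$. Noise arrays $(\eta^{i,l}_n)_{i,l}$ are i.i.d. in $n$ with $\mathbb E\eta^{i,l}_n=0$, $\mathbb E|\eta^{i,l}_n|^2\le\zeta^2$; initial data $X_0$ (deterministic or random), batches, and noises are mutually independent. The dynamics is $\mathbf x^i_{n+1}=\mathbf x^i_n-\gamma(\mathbf x^i_n-\bar{\mathbf x}^{[i]_n,*}_n)-\sum_{l=1}^d(x^{i,l}_n-\bar x^{[i]_n,*,l}_n)\eta^{i,l}_n\mathbf e_l$ with $\bar{\mathbf x}^{S,*}_n=\sum_j\omega_{S,j}(X_n)\mathbf x^j_n$, $X_n=(\mathbf x^1_n,\dots,\mathbf x^N_n)$. Let $\mathfrak x^l_n:=(x^{1,l}_n,\dots,x^{N,l}_n)^\top$ and $\mathcal D(\mathbf z):=\max_iz_i-\min_iz_i$. A positive integer $m_0$ has the covering property if there exist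 partitions $\mathcal P^1,\dots,\mathcal P^{m_0}\in\mathcal A$ such that every pair $i,j\in\mathcal N$ lies in a common block of some $\mathcal P^k$. *)

theory Defs
  imports "HOL-Probability.Probability"
begin

text \<open>Particle index set {1..N}, coordinate index set {1..d}.
  A configuration X = (x^1,...,x^N) in (R^d)^N is an extensional function
  on {1..N} x {1..d}: X (i,l) = x^{i,l}.\<close>

type_synonym config = "nat \<times> nat \<Rightarrow> real"

definition config_space :: "nat \<Rightarrow> nat \<Rightarrow> config measure" where
  "config_space N d = PiM ({1..N} \<times> {1..d}) (\<lambda>_. borel)"

definition admissible :: "nat \<Rightarrow> nat \<Rightarrow> nat set set set" where
  "admissible N P = {B. partition_on {1..N} B
      \<and> card B = nat \<lceil>real N / real P\<rceil>
      \<and> (\<forall>S\<in>B. card S \<le> P)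
      \<and> card {S\<in>B. card S \<noteq> P} \<le> 1}"

definition covering_property :: "nat \<Rightarrow> nat \<Rightarrow> nat \<Rightarrow> bool" where
  "covering_property N P m0 = (\<exists>Pt :: nat \<Rightarrow> nat set set.
      (\<forall>k\<in>{1..m0}. Pt k \<in> admissible N P) \<and>
      (\<forall>i\<in>{1..N}. \<forall>j\<in>{1..N}. \<exists>k\<in>{1..m0}. \<exists>S\<in>Pt k. i \<in> S \<and> j \<in> S))"

definition batch_of :: "nat set set \<Rightarrow> nat \<Rightarrow> nat set" where
  "batch_of B i = (THE S. S \<in> B \<and> i \<in> S)"

definition wavg :: "(nat set \<Rightarrow> nat \<Rightarrow> config \<Rightarrow> real) \<Rightarrow> nat set \<Rightarrow> config \<Rightarrow> nat \<Rightarrow> real" where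
  "wavg \<omega> S X l = (\<Sum>j\<in>S. \<omega> S j X * X (j, l))"

definition cbo_step :: "nat \<Rightarrow> nat \<Rightarrow> real \<Rightarrow> (nat set \<Rightarrow> nat \<Rightarrow> config \<Rightarrow> real)
     \<Rightarrow> nat set set \<Rightarrow> config \<Rightarrow> config \<Rightarrow> config" where
  "cbo_step N d \<gamma> \<omega> B \<eta> X = (\<lambda>p. if fst p \<in> {1..N} \<and> snd p \<in> {1..d} then
       X p - \<gamma> * (X p - wavg \<omega> (batch_of B (fst p)) X (snd p))
           - (X p - wavg \<omega> (batch_of B (fst p)) X (snd p)) * \<eta> p
     else undefined)"

primrec cbo_traj :: "nat \<Rightarrow> nat \<Rightarrow> real \<Rightarrow> (nat set \<Rightarrow> nat \<Rightarrow> config \<Rightarrow> real)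
     \<Rightarrow> config \<Rightarrow> (nat \<Rightarrow> nat set set) \<Rightarrow> (nat \<Rightarrow> config) \<Rightarrow> nat \<Rightarrow> config" where
  "cbo_traj N d \<gamma> \<omega> X0 B \<eta> 0 = X0"
| "cbo_traj N d \<gamma> \<omega> X0 B \<eta> (Suc n) = cbo_step N d \<gamma> \<omega> (B n) (\<eta> n) (cbo_traj N d \<gamma> \<omega> X0 B \<eta> n)"

definition cbo_path :: "nat \<Rightarrow> nat \<Rightarrow> real \<Rightarrow> (nat set \<Rightarrow> nat \<Rightarrow> config \<Rightarrow> real)
     \<Rightarrow> ('a \<Rightarrow> config) \<Rightarrow> (nat \<Rightarrow> 'a \<Rightarrow> nat set set) \<Rightarrow> (nat \<Rightarrow> 'a \<Rightarrow> config)
     \<Rightarrow> 'a \<Rightarrow> nat \<Rightarrow> config" where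
  "cbo_path N d \<gamma> \<omega> X0 B \<eta> w n = cbo_traj N d \<gamma> \<omega> (X0 w) (\<lambda>k. B k w) (\<lambda>k. \<eta> k w) n"

definition diam_coord :: "nat \<Rightarrow> config \<Rightarrow> nat \<Rightarrow> real" where
  "diam_coord N X l = (MAX i\<in>{1..N}. X (i, l)) - (MIN i\<in>{1..N}. X (i, l))"

definition dist1 :: "nat \<Rightarrow> config \<Rightarrow> nat \<Rightarrow> (nat \<Rightarrow> real) \<Rightarrow> real" where
  "dist1 d X i y = (\<Sum>l\<in>{1..d}. \<bar>X (i, l) - y l\<bar>)"

datatype src = SrcX0 | SrcB nat | SrcEta nat

definition rbcbo_setting ::
  "nat \<Rightarrow> nat \<Rightarrow> nat \<Rightarrow> real \<Rightarrow> 'a measure \<Rightarrow> (nat set \<Rightarrow> nat \<Rightarrow> config \<Rightarrow> real)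
   \<Rightarrow> ('a \<Rightarrow> config) \<Rightarrow> (nat \<Rightarrow> 'a \<Rightarrow> nat set set) \<Rightarrow> (nat \<Rightarrow> 'a \<Rightarrow> config) \<Rightarrow> bool" where
  "rbcbo_setting N d P \<zeta> M \<omega> X0 B \<eta> \<longleftrightarrow>
     prob_space M
   \<comment> \<open>weights\<close>
   \<and> (\<forall>S. S \<noteq> {} \<and> S \<subseteq> {1..N} \<longrightarrow>
        (\<forall>j\<in>{1..N}. \<omega> S j \<in> borel_measurable (config_space N d)) \<and>
        (\<forall>X\<in>space (config_space N d).
            (\<forall>j\<in>{1..N}. \<omega> S j X \<ge> 0) \<and> (\<Sum>j\<in>S. \<omega> S j X) = 1
          \<and> (\<forall>j\<in>{1..N} - S. \<omega> S j X = 0)))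
   \<comment> \<open>initial data\<close>
   \<and> X0 \<in> measurable M (config_space N d)
   \<comment> \<open>batches: uniform on A\<close>
   \<and> (\<forall>n. B n \<in> measurable M (count_space (admissible N P)))
   \<and> (\<forall>n. \<forall>Q\<in>admissible N P.
        measure M {w\<in>space M. B n w = Q} = 1 / real (card (admissible N P)))
   \<comment> \<open>noise arrays: identically distributed, mean zero, second moment \<le> zeta^2\<close>
   \<and> (\<forall>n. \<eta> n \<in> measurable M (config_space N d))
   \<and> (\<forall>n. distr M (config_space N d) (\<eta> n) = distr M (config_space N d) (\<eta> 0))
   \<and> (\<forall>n. \<forall>i\<in>{1..N}. \<forall>l\<in>{1..d}.
        integrable M (\<lambda>w. \<eta> n w (i, l)) \<and> (\<integral>w. \<eta> n w (i, l) \<partial>M) = 0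
      \<and> (\<integral>\<^sup>+ w. ennreal ((\<eta> n w (i, l))\<^sup>2) \<partial>M) \<le> ennreal (\<zeta>\<^sup>2))
   \<comment> \<open>mutual independence of X0, B^0, B^1, ..., eta_0, eta_1, ...\<close>
   \<and> prob_space.indep_sets M (\<lambda>k. case k of
          SrcX0 \<Rightarrow> {X0 -` A \<inter> space M | A. A \<in> sets (config_space N d)}
        | SrcB n \<Rightarrow> {B n -` A \<inter> space M | A. A \<in> sets (count_space (admissible N P))}
        | SrcEta n \<Rightarrow> {\<eta> n -` A \<inter> space M | A. A \<in> sets (config_space N d)}) UNIV"

end

theory Submission
  imports Defs
begin

lemma partition_uniq:
  assumes po: "partition_on X Q" and S: "S \<in> Q" "i \<in> S" and T: "T \<in> Q" "i \<in> T"
  shows "T = S"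
proof (rule ccontr)
  assume "T \<noteq> S"
  then have "disjnt T S" using po T(1) S(1) unfolding partition_on_def disjoint_def disjnt_def by blast
  then show False using S T by (auto simp: disjnt_def)
qed

lemma batch_of_eq:
  assumes Q: "Q \<in> admissible N P" and S: "S \<in> Q" "i \<in> S"
  shows "batch_of Q i = S"
proof -
  have po: "partition_on {1..N} Q" using Q by (simp add: admissible_def)
  show ?thesis unfolding batch_of_def
  proof (rule the_equality)
    show "S \<in> Q \<and> i \<in> S" using S by simp
    fix T assume "T \<in> Q \<and> i \<in> T"
    then show "T = S" using partition_uniq[OF po S] by blast
  qed
qed

lemma batch_of_props:
  assumes Q: "Q \<in> admissible N P" and i: "i \<in> {1..N}"
  shows "batch_of Q i \<in> Q" "i \<in> batch_of Q i" "batch_of Q i \<subseteq> {1..N}" "batch_of Q i \<noteq> {}"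
proof -
  have po: "partition_on {1..N} Q" using Q by (simp add: admissible_def)
  have "i \<in> \<Union>Q" using po i unfolding partition_on_def by simp
  then obtain S where S: "S \<in> Q" "i \<in> S" by blast
  have bS: "batch_of Q i = S" using batch_of_eq[OF Q S] .
  show "batch_of Q i \<in> Q" "i \<in> batch_of Q i" using bS S by auto
  have "S \<subseteq> \<Union>Q" using S by blast
  then show "batch_of Q i \<subseteq> {1..N}" using bS po unfolding partition_on_def by simp
  show "batch_of Q i \<noteq> {}" using bS S by auto
qed

lemma admissible_finite: "finite (admissible N P)"
proof -
  have "admissible N P \<subseteq> Pow (Pow {1..N})"
  proof
    fix Q assume "Q \<in> admissible N P"
    then have "partition_on {1..N} Q" by (simp add: admissible_def)
    then have "\<Union>Q = {1..N}" by (simp add: partition_on_def)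
    then show "Q \<in> Pow (Pow {1..N})" by blast
  qed
  then show ?thesis by (rule finite_subset) simp
qed


locale blk =
  fixes I :: "nat set" and \<gamma> :: real and a c r :: "nat \<Rightarrow> nat \<Rightarrow> real" and \<epsilon> :: "nat \<Rightarrow> real"
  assumes fin: "finite I" and ne: "I \<noteq> {}" and g0: "0 < \<gamma>" and g1: "\<gamma> < 1"
    and step: "\<And>k i. i \<in> I \<Longrightarrow> a (Suc k) i = (1-\<gamma>) * a k i + \<gamma> * c k i + r k i"
    and hull: "\<And>k i. i \<in> I \<Longrightarrow> Min (a k ` I) \<le> c k i \<and> c k i \<le> Max (a k ` I)"
    and err: "\<And>k i. i \<in> I \<Longrightarrow> \<bar>r k i\<bar> \<le> \<epsilon> k"
begin

definition "E k = (\<Sum>s<k. \<epsilon> s)"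
definition "hi = Max (a 0 ` I)"
definition "lo = Min (a 0 ` I)"

lemma exmax: "\<exists>i\<in>I. a k i = Max (a k ` I)"
proof -
  have "Max (a k ` I) \<in> a k ` I" using fin ne by (intro Max_in) auto
  then show ?thesis by (metis imageE)
qed
lemma exmin: "\<exists>i\<in>I. a k i = Min (a k ` I)"
proof -
  have "Min (a k ` I) \<in> a k ` I" using fin ne by (intro Min_in) auto
  then show ?thesis by (metis imageE)
qed

lemma eps_nn: "0 \<le> \<epsilon> k"
proof -
  obtain i where "i \<in> I" using ne by auto
  from err[OF this, of k] show ?thesis by linarith
qed

lemma E_nn: "0 \<le> E k" unfolding E_def by (simp add: sum_nonneg eps_nn)
lemma E_Suc: "E (Suc k) = E k + \<epsilon> k" unfolding E_def by simp
lemma E_mono: "E k \<le> E (Suc k)" using E_Suc eps_nn[of k] by simp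

lemma envelope: "\<forall>i\<in>I. lo - E k \<le> a k i \<and> a k i \<le> hi + E k"
proof (induction k)
  case 0
  show ?case using fin by (auto simp: E_def lo_def hi_def)
next
  case (Suc k)
  obtain i0 where i0: "i0 \<in> I" "a k i0 = Max (a k ` I)"
    using exmax by blast
  obtain i1 where i1: "i1 \<in> I" "a k i1 = Min (a k ` I)"
    using exmin by blast
  show ?case
  proof
    fix i assume i: "i \<in> I"
    have c1: "c k i \<le> hi + E k" using hull[OF i, of k] i0 Suc.IH by force
    have c2: "lo - E k \<le> c k i" using hull[OF i, of k] i1 Suc.IH by force
    have ai: "lo - E k \<le> a k i \<and> a k i \<le> hi + E k" using Suc.IH i by blast
    have ri: "\<bar>r k i\<bar> \<le> \<epsilon> k" using err[OF i] .
    have st: "a (Suc k) i = (1-\<gamma>) * a k i + \<gamma> * c k i + r k i" using step[OF i] .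
    have "(1-\<gamma>) * a k i + \<gamma> * c k i \<le> (1-\<gamma>) * (hi + E k) + \<gamma> * (hi + E k)"
      using ai c1 g0 g1 by (intro add_mono mult_left_mono) auto
    moreover have "(1-\<gamma>) * (lo - E k) + \<gamma> * (lo - E k) \<le> (1-\<gamma>) * a k i + \<gamma> * c k i"
      using ai c2 g0 g1 by (intro add_mono mult_left_mono) auto
    ultimately show "lo - E (Suc k) \<le> a (Suc k) i \<and> a (Suc k) i \<le> hi + E (Suc k)"
      using st ri E_Suc[of k] by (auto simp: algebra_simps)
  qed
qed

lemma c_env: assumes i: "i \<in> I" shows "lo - E k \<le> c k i \<and> c k i \<le> hi + E k"
proof -
  obtain i0 where i0: "i0 \<in> I" "a k i0 = Max (a k ` I)"
    using exmax by blast
  obtain i1 where i1: "i1 \<in> I" "a k i1 = Min (a k ` I)"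
    using exmin by blast
  show ?thesis using hull[OF i, of k] i0 i1 envelope[of k] by force
qed

lemma lohi: "lo \<le> hi"
proof -
  obtain i where i: "i \<in> I" using ne by auto
  have "lo \<le> a 0 i" "a 0 i \<le> hi" unfolding lo_def hi_def using fin i by auto
  then show ?thesis by simp
qed

lemma meeting_aux:
  assumes i: "i \<in> I" and j: "j \<in> I" and cij: "c s0 i = c s0 j"
  shows "Suc s0 \<le> k \<Longrightarrow> (hi - a k i) + (a k j - lo) \<ge> (1-\<gamma>)^k * \<gamma> * (hi - lo) - 2 * k * E k"
proof (induction k)
  case 0 then show ?case by simp
next
  case (Suc k)
  have ri: "\<bar>r k i\<bar> \<le> \<epsilon> k" "\<bar>r k j\<bar> \<le> \<epsilon> k" using err i j by auto
  have sti: "a (Suc k) i = (1-\<gamma>) * a k i + \<gamma> * c k i + r k i" using step[OF i] .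
  have stj: "a (Suc k) j = (1-\<gamma>) * a k j + \<gamma> * c k j + r k j" using step[OF j] .
  have D0: "0 \<le> hi - lo" using lohi by simp
  have pw: "(1-\<gamma>)^Suc k \<le> 1" using g0 g1 power_le_one[of "1-\<gamma>" "Suc k"] by simp
  have pw': "0 \<le> (1-\<gamma>)^k" using g1 by simp
  show ?case
  proof (cases "k = s0")
    case True
    have ek: "a k i \<le> hi + E k" "lo - E k \<le> a k j" using envelope[of k] i j by auto
    have X: "(1-\<gamma>) * ((hi - a k i) + (a k j - lo)) \<ge> (1-\<gamma>) * (- 2 * E k)"
      using ek g1 by (intro mult_left_mono) auto
    have "(hi - a (Suc k) i) + (a (Suc k) j - lo)
        = (1-\<gamma>) * ((hi - a k i) + (a k j - lo)) + \<gamma> * (hi - lo) - r k i + r k j"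
      using sti stj cij True by (simp add: algebra_simps)
    also have "\<dots> \<ge> (1-\<gamma>) * (- 2 * E k) + \<gamma> * (hi - lo) - 2 * \<epsilon> k"
      using X ri by linarith
    finally have A0: "(hi - a (Suc k) i) + (a (Suc k) j - lo) \<ge> (1-\<gamma>) * (- 2 * E k) + \<gamma> * (hi - lo) - 2 * \<epsilon> k" .
    have A: "(hi - a (Suc k) i) + (a (Suc k) j - lo) \<ge> \<gamma> * (hi - lo) - 2 * E (Suc k)"
    proof -
      have "(1-\<gamma>) * (- 2 * E k) = -2 * E k + 2 * (\<gamma> * E k)" by (simp add: algebra_simps)
      moreover have "0 \<le> \<gamma> * E k" using g0 E_nn[of k] by simp
      ultimately show ?thesis using A0 E_Suc[of k] by linarith
    qed
    have "(1-\<gamma>)^Suc k * \<gamma> * (hi - lo) \<le> \<gamma> * (hi - lo)"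
    proof -
      have "(1-\<gamma>)^Suc k * (\<gamma> * (hi - lo)) \<le> 1 * (\<gamma> * (hi - lo))"
        using pw D0 g0 by (intro mult_right_mono) auto
      then show ?thesis by (simp add: mult.assoc)
    qed
    moreover have "2 * E (Suc k) \<le> 2 * real (Suc k) * E (Suc k)"
      using E_nn[of "Suc k"] by (simp add: mult_right_mono)
    ultimately show ?thesis using A by linarith
  next
    case False
    then have IH: "(hi - a k i) + (a k j - lo) \<ge> (1-\<gamma>)^k * \<gamma> * (hi - lo) - 2 * k * E k"
      using Suc by auto
    have ce: "c k i \<le> hi + E k" "lo - E k \<le> c k j" using c_env i j by auto
    have "(hi - a (Suc k) i) + (a (Suc k) j - lo)
        = (1-\<gamma>) * ((hi - a k i) + (a k j - lo)) + \<gamma> * (hi - c k i) + \<gamma> * (c k j - lo) - r k i + r k j"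
      using sti stj by (simp add: algebra_simps)
    also have "\<dots> \<ge> (1-\<gamma>) * ((1-\<gamma>)^k * \<gamma> * (hi - lo) - 2 * k * E k) - 2 * \<gamma> * E k - 2 * \<epsilon> k"
    proof -
      have "(1-\<gamma>) * ((hi - a k i) + (a k j - lo)) \<ge> (1-\<gamma>) * ((1-\<gamma>)^k * \<gamma> * (hi - lo) - 2 * k * E k)"
        using IH g1 by (intro mult_left_mono) auto
      moreover have "\<gamma> * (hi - c k i) \<ge> \<gamma> * (- E k)"
        by (rule mult_left_mono) (use ce g0 in auto)
      moreover have "\<gamma> * (c k j - lo) \<ge> \<gamma> * (- E k)"
        by (rule mult_left_mono) (use ce g0 in auto)
      ultimately show ?thesis using ri by linarith
    qed
    finally have A1: "(hi - a (Suc k) i) + (a (Suc k) j - lo)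
       \<ge> (1-\<gamma>) * ((1-\<gamma>)^k * \<gamma> * (hi - lo) - 2 * k * E k) - 2 * \<gamma> * E k - 2 * \<epsilon> k" .
    have id1: "(1-\<gamma>) * ((1-\<gamma>)^k * \<gamma> * (hi - lo) - 2 * k * E k)
       = (1-\<gamma>)^Suc k * \<gamma> * (hi - lo) - 2 * ((1-\<gamma>) * k * E k)" by (simp add: algebra_simps)
    have A: "(hi - a (Suc k) i) + (a (Suc k) j - lo)
       \<ge> (1-\<gamma>)^Suc k * \<gamma> * (hi - lo) - 2 * ((1-\<gamma>) * k * E k) - 2 * (\<gamma> * E k) - 2 * \<epsilon> k"
      using A1 id1 by linarith
    have "(1-\<gamma>) * k * E k \<le> k * E (Suc k)"
    proof -
      have "(1-\<gamma>) * (k * E k) \<le> 1 * (k * E k)" using g0 E_nn[of k] by (intro mult_right_mono) auto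
      also have "\<dots> \<le> k * E (Suc k)" using E_mono[of k] by (simp add: mult_left_mono)
      finally show ?thesis by simp
    qed
    moreover have "\<gamma> * E k \<le> E k" using g1 E_nn[of k] mult_right_mono[of \<gamma> 1 "E k"] by simp
    moreover have "2 * real (Suc k) * E (Suc k) = 2 * (k * E (Suc k)) + 2 * E (Suc k)" by (simp add: algebra_simps)
    ultimately show ?thesis using A E_Suc[of k] by linarith
  qed
qed

lemma diam_general: "Max (a k ` I) - Min (a k ` I) \<le> (hi - lo) + 2 * E k"
proof -
  obtain i0 where i0: "i0 \<in> I" "a k i0 = Max (a k ` I)"
    using exmax by blast
  obtain i1 where i1: "i1 \<in> I" "a k i1 = Min (a k ` I)"
    using exmin by blast
  have "a k i0 \<le> hi + E k" "lo - E k \<le> a k i1" using envelope[of k] i0 i1 by auto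
  then show ?thesis using i0(2) i1(2) by linarith
qed

lemma diam_meet:
  assumes m: "\<forall>i\<in>I. \<forall>j\<in>I. \<exists>s0<k. c s0 i = c s0 j"
  shows "Max (a k ` I) - Min (a k ` I) \<le> (1 - \<gamma> * (1-\<gamma>)^k) * (hi - lo) + 2 * k * E k"
proof -
  obtain i0 where i0: "i0 \<in> I" "a k i0 = Max (a k ` I)"
    using exmax by blast
  obtain i1 where i1: "i1 \<in> I" "a k i1 = Min (a k ` I)"
    using exmin by blast
  obtain s0 where s0: "s0 < k" "c s0 i0 = c s0 i1" using m i0 i1 by blast
  have "(hi - a k i0) + (a k i1 - lo) \<ge> (1-\<gamma>)^k * \<gamma> * (hi - lo) - 2 * k * E k"
    using meeting_aux[OF i0(1) i1(1) s0(2)] s0(1) by simp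
  then show ?thesis using i0 i1 by (simp add: algebra_simps)
qed

end

lemma Int_stable_preimage: "Int_stable {X -` A \<inter> space M | A. A \<in> sets S}"
  unfolding Int_stable_def
  apply auto
  apply (rule_tac x="A \<inter> Aa" in exI)
  apply auto
  done

lemma wavg_hull:
  assumes x: "\<forall>j\<in>S. 0 \<le> \<omega> S j x" and s1: "(\<Sum>j\<in>S. \<omega> S j x) = 1"
    and S: "S \<subseteq> {1..N}" "S \<noteq> {}"
  shows "(MIN j\<in>{1..N}. x (j,l)) \<le> wavg \<omega> S x l \<and> wavg \<omega> S x l \<le> (MAX j\<in>{1..N}. x (j,l))"
proof
  have le1: "\<And>j. j \<in> S \<Longrightarrow> x (j,l) \<le> (MAX j\<in>{1..N}. x (j,l))"
    using S by (intro Max_ge) auto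
  have le2: "\<And>j. j \<in> S \<Longrightarrow> (MIN j\<in>{1..N}. x (j,l)) \<le> x (j,l)"
    using S by (intro Min_le) auto
  have "wavg \<omega> S x l \<le> (\<Sum>j\<in>S. \<omega> S j x * (MAX j\<in>{1..N}. x (j,l)))"
    unfolding wavg_def using x le1 by (intro sum_mono mult_left_mono) auto
  also have "\<dots> = (\<Sum>j\<in>S. \<omega> S j x) * (MAX j\<in>{1..N}. x (j,l))" by (rule sum_distrib_right[symmetric])
  also have "\<dots> = (MAX j\<in>{1..N}. x (j,l))" using s1 by simp
  finally show "wavg \<omega> S x l \<le> (MAX j\<in>{1..N}. x (j,l))" .
  have "(\<Sum>j\<in>S. \<omega> S j x * (MIN j\<in>{1..N}. x (j,l))) \<le> wavg \<omega> S x l"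
    unfolding wavg_def using x le2 by (intro sum_mono mult_left_mono) auto
  moreover have "(\<Sum>j\<in>S. \<omega> S j x * (MIN j\<in>{1..N}. x (j,l))) = (\<Sum>j\<in>S. \<omega> S j x) * (MIN j\<in>{1..N}. x (j,l))"
    by (rule sum_distrib_right[symmetric])
  ultimately show "(MIN j\<in>{1..N}. x (j,l)) \<le> wavg \<omega> S x l" using s1 by simp
qed

lemma space_CS: "space (config_space N d) = (\<Pi>\<^sub>E p\<in>{1..N} \<times> {1..d}. UNIV)"
  by (simp add: config_space_def space_PiM)

locale rbs = prob_space M for M :: "'a measure" +
  fixes N d P :: nat and \<gamma> \<zeta> :: real and \<omega> X0 B \<eta>
  assumes setting: "rbcbo_setting N d P \<zeta> M \<omega> X0 B \<eta>"
    and N2: "N \<ge> 2" and g0: "0 < \<gamma>" and g1: "\<gamma> < 1" and z0: "0 \<le> \<zeta>"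
begin

abbreviation "CS \<equiv> config_space N d"
abbreviation "AA \<equiv> admissible N P"

lemmas st = setting[unfolded rbcbo_setting_def]
lemmas st_w = st[THEN conjunct2, THEN conjunct1]
lemmas st_X0 = st[THEN conjunct2, THEN conjunct2, THEN conjunct1]
lemmas st_B = st[THEN conjunct2, THEN conjunct2, THEN conjunct2, THEN conjunct1]
lemmas st_Bu = st[THEN conjunct2, THEN conjunct2, THEN conjunct2, THEN conjunct2, THEN conjunct1]
lemmas st_eta = st[THEN conjunct2, THEN conjunct2, THEN conjunct2, THEN conjunct2, THEN conjunct2, THEN conjunct1]
lemmas st_mom = st[THEN conjunct2, THEN conjunct2, THEN conjunct2, THEN conjunct2, THEN conjunct2, THEN conjunct2, THEN conjunct2, THEN conjunct1]
lemmas st_ind = st[THEN conjunct2, THEN conjunct2, THEN conjunct2, THEN conjunct2, THEN conjunct2, THEN conjunct2, THEN conjunct2, THEN conjunct2]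

lemma w_all: "S \<noteq> {} \<Longrightarrow> S \<subseteq> {1..N} \<Longrightarrow> (\<forall>j\<in>{1..N}. \<omega> S j \<in> borel_measurable CS) \<and>
        (\<forall>X\<in>space CS.
            (\<forall>j\<in>{1..N}. \<omega> S j X \<ge> 0) \<and> (\<Sum>j\<in>S. \<omega> S j X) = 1
          \<and> (\<forall>j\<in>{1..N} - S. \<omega> S j X = 0))"
  by (rule mp[OF spec[OF st_w, of S]]) simp
lemma w_meas: "S \<noteq> {} \<Longrightarrow> S \<subseteq> {1..N} \<Longrightarrow> j \<in> {1..N} \<Longrightarrow> \<omega> S j \<in> borel_measurable CS"
  using w_all by simp
lemma w_props: "S \<noteq> {} \<Longrightarrow> S \<subseteq> {1..N} \<Longrightarrow> X \<in> space CS \<Longrightarrow>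
   (\<forall>j\<in>{1..N}. \<omega> S j X \<ge> 0) \<and> (\<Sum>j\<in>S. \<omega> S j X) = 1"
  using w_all by simp
lemma X0_meas: "X0 \<in> measurable M CS" using st_X0 .
lemma B_meas: "B n \<in> measurable M (count_space AA)" using st_B by (rule spec)
lemma B_unif: "Q \<in> AA \<Longrightarrow> measure M {w\<in>space M. B n w = Q} = 1 / real (card AA)"
  using st_Bu by simp
lemma eta_meas: "\<eta> n \<in> measurable M CS" using st_eta by (rule spec)
lemma eta_mom: "i \<in> {1..N} \<Longrightarrow> l \<in> {1..d} \<Longrightarrow>
   (\<integral>\<^sup>+ w. ennreal ((\<eta> n w (i, l))\<^sup>2) \<partial>M) \<le> ennreal (\<zeta>\<^sup>2)"
  using st_mom by simp

definition Ecl :: "src \<Rightarrow> 'a set set" where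
  "Ecl = (\<lambda>k. case k of
          SrcX0 \<Rightarrow> {X0 -` A \<inter> space M | A. A \<in> sets (config_space N d)}
        | SrcB n \<Rightarrow> {B n -` A \<inter> space M | A. A \<in> sets (count_space (admissible N P))}
        | SrcEta n \<Rightarrow> {\<eta> n -` A \<inter> space M | A. A \<in> sets (config_space N d)})"

lemma indep_all: "indep_sets Ecl UNIV"
  using st_ind unfolding Ecl_def .

lemma Ecl_stable: "Int_stable (Ecl i)"
  unfolding Ecl_def by (cases i) (simp_all only: src.case Int_stable_preimage)

lemma Ecl_sets: "Ecl i \<subseteq> sets M"
proof (cases i)
  case SrcX0 then show ?thesis unfolding Ecl_def using measurable_sets[OF X0_meas] by auto
next
  case (SrcB n) then show ?thesis unfolding Ecl_def using measurable_sets[OF B_meas[of n]] by auto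
next
  case (SrcEta n) then show ?thesis unfolding Ecl_def using measurable_sets[OF eta_meas[of n]] by auto
qed

definition Msub :: "src set \<Rightarrow> 'a measure" where
  "Msub I = sigma (space M) (\<Union>i\<in>I. Ecl i)"

lemma Msub_pow: "(\<Union>i\<in>I. Ecl i) \<subseteq> Pow (space M)"
  using Ecl_sets sets.sets_into_space by blast

lemma space_Msub[simp]: "space (Msub I) = space M"
  unfolding Msub_def using Msub_pow by (simp add: space_measure_of_conv)

lemma sets_Msub: "sets (Msub I) = sigma_sets (space M) (\<Union>i\<in>I. Ecl i)"
  unfolding Msub_def using Msub_pow by (simp add: sets_measure_of)

lemma subalg_Msub: "subalgebra M (Msub I)"
  unfolding subalgebra_def sets_Msub
  using Ecl_sets by (auto intro!: sets.sigma_sets_subset)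

lemma Msub_mono:
  assumes "I \<subseteq> J" "f \<in> measurable (Msub I) N'"
  shows "f \<in> measurable (Msub J) N'"
proof -
  have "subalgebra (Msub J) (Msub I)"
    unfolding subalgebra_def sets_Msub using assms(1)
    by (auto intro!: sigma_sets_mono')
  then show ?thesis using measurable_from_subalg assms(2) by blast
qed

lemma Msub_meas_M: "f \<in> measurable (Msub I) N' \<Longrightarrow> f \<in> measurable M N'"
  using measurable_from_subalg subalg_Msub by blast

lemma gen_meas:
  assumes i: "i \<in> I" and f: "f \<in> measurable M N'"
    and cl: "Ecl i = {f -` A \<inter> space M | A. A \<in> sets N'}"
  shows "f \<in> measurable (Msub I) N'"
proof (rule measurableI)
  fix x assume "x \<in> space (Msub I)" then show "f x \<in> space N'"
    using f measurable_space by auto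
next
  fix A assume "A \<in> sets N'"
  then have "f -` A \<inter> space M \<in> Ecl i" using cl by blast
  then show "f -` A \<inter> space (Msub I) \<in> sets (Msub I)"
    unfolding sets_Msub using i by auto
qed

lemma Ecl_X0: "Ecl SrcX0 = {X0 -` A \<inter> space M | A. A \<in> sets CS}"
  unfolding Ecl_def by simp
lemma Ecl_B: "Ecl (SrcB n) = {B n -` A \<inter> space M | A. A \<in> sets (count_space AA)}"
  unfolding Ecl_def by (simp only: src.case)
lemma Ecl_eta: "Ecl (SrcEta n) = {\<eta> n -` A \<inter> space M | A. A \<in> sets CS}"
  unfolding Ecl_def by simp

lemma X0_sub: "SrcX0 \<in> I \<Longrightarrow> X0 \<in> measurable (Msub I) CS"
  by (rule gen_meas[OF _ X0_meas Ecl_X0])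
lemma B_sub: "SrcB n \<in> I \<Longrightarrow> B n \<in> measurable (Msub I) (count_space AA)"
  by (rule gen_meas[OF _ B_meas Ecl_B])
lemma eta_sub: "SrcEta n \<in> I \<Longrightarrow> \<eta> n \<in> measurable (Msub I) CS"
  by (rule gen_meas[OF _ eta_meas Ecl_eta])

lemma indep_prod:
  fixes f g :: "'a \<Rightarrow> ennreal"
  assumes IJ: "I \<inter> J = {}" and f: "f \<in> borel_measurable (Msub I)" and g: "g \<in> borel_measurable (Msub J)"
  shows "(\<integral>\<^sup>+ w. f w * g w \<partial>M) = (\<integral>\<^sup>+ w. f w \<partial>M) * (\<integral>\<^sup>+ w. g w \<partial>M)"
proof -
  let ?K = "case_bool I J"
  have "indep_sets Ecl (\<Union>b. ?K b)"
    by (rule indep_sets_mono_index[OF subset_UNIV indep_all])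
  moreover have dj: "disjoint_family_on ?K UNIV"
    unfolding disjoint_family_on_def using IJ by (auto split: bool.split)
  ultimately have ind: "indep_sets (\<lambda>b. sigma_sets (space M) (\<Union>i\<in>?K b. Ecl i)) UNIV"
    using Ecl_stable by (intro indep_sets_collect_sigma) auto
  let ?X = "case_bool f g"
  have rv: "\<And>b. random_variable borel (?X b)"
    using Msub_meas_M f g by (auto split: bool.split)
  have iv: "indep_vars (\<lambda>_. borel) ?X UNIV"
    unfolding indep_vars_def2
  proof
    show "\<forall>i\<in>UNIV. random_variable borel (?X i)" using rv by auto
    show "indep_sets (\<lambda>i. {?X i -` A \<inter> space M |A. A \<in> sets borel}) UNIV"
    proof (rule indep_sets_mono_sets[OF ind])
      fix b :: bool
      show "{?X b -` A \<inter> space M |A. A \<in> sets borel} \<subseteq> sigma_sets (space M) (\<Union>i\<in>?K b. Ecl i)"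
      proof (cases b)
        case True
        then show ?thesis using measurable_sets[OF f] by (auto simp: sets_Msub)
      next
        case False
        then show ?thesis using measurable_sets[OF g] by (auto simp: sets_Msub)
      qed
    qed
  qed
  have "(\<integral>\<^sup>+ w. (\<Prod>b\<in>UNIV. ?X b w) \<partial>M) = (\<Prod>b\<in>UNIV. \<integral>\<^sup>+ w. ?X b w \<partial>M)"
    by (rule indep_vars_nn_integral[OF _ iv]) auto
  then show ?thesis by (simp add: UNIV_bool mult.commute)
qed

end

context rbs begin

definition "Xt w n = cbo_path N d \<gamma> \<omega> X0 B \<eta> w n"

lemma Xt_0: "Xt w 0 = X0 w" by (simp add: Xt_def cbo_path_def)
lemma Xt_Suc: "Xt w (Suc n) = cbo_step N d \<gamma> \<omega> (B n w) (\<eta> n w) (Xt w n)"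
  by (simp add: Xt_def cbo_path_def)

lemma comp_meas:
  assumes x: "x \<in> measurable M' CS" and p: "p \<in> {1..N} \<times> {1..d}"
  shows "(\<lambda>w. x w p) \<in> borel_measurable M'"
  using measurable_compose[OF x[unfolded config_space_def] measurable_component_singleton[OF p]] by simp

lemma wavg_meas:
  assumes x: "x \<in> measurable M' CS" and S: "S \<noteq> {}" "S \<subseteq> {1..N}" and l: "l \<in> {1..d}"
  shows "(\<lambda>w. wavg \<omega> S (x w) l) \<in> borel_measurable M'"
  unfolding wavg_def
proof (rule borel_measurable_sum)
  fix j assume j: "j \<in> S"
  then have j': "j \<in> {1..N}" using S by auto
  have "(\<lambda>w. \<omega> S j (x w)) \<in> borel_measurable M'"
    using measurable_compose[OF x w_meas[OF S j']] .
  moreover have "(\<lambda>w. x w (j,l)) \<in> borel_measurable M'"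
    using comp_meas[OF x] j' l by simp
  ultimately show "(\<lambda>w. \<omega> S j (x w) * x w (j, l)) \<in> borel_measurable M'"
    by (rule borel_measurable_times)
qed

lemma step_fixed_meas:
  assumes Q: "Q \<in> AA" and e: "e \<in> measurable M' CS" and x: "x \<in> measurable M' CS"
  shows "(\<lambda>w. cbo_step N d \<gamma> \<omega> Q (e w) (x w)) \<in> measurable M' CS"
proof -
  define F where "F p w = x w p - \<gamma> * (x w p - wavg \<omega> (batch_of Q (fst p)) (x w) (snd p))
           - (x w p - wavg \<omega> (batch_of Q (fst p)) (x w) (snd p)) * e w p" for p w
  have eq: "(\<lambda>w. cbo_step N d \<gamma> \<omega> Q (e w) (x w)) = (\<lambda>w. \<lambda>p\<in>{1..N} \<times> {1..d}. F p w)"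
    by (rule ext, rule ext) (auto simp: cbo_step_def F_def mem_Times_iff)
  have "(\<lambda>w. \<lambda>p\<in>{1..N} \<times> {1..d}. F p w) \<in> measurable M' (Pi\<^sub>M ({1..N} \<times> {1..d}) (\<lambda>_. borel))"
  proof (rule measurable_restrict)
    fix p assume p: "p \<in> {1..N} \<times> {1..d}"
    then obtain i l where pil: "p = (i,l)" "i \<in> {1..N}" "l \<in> {1..d}" by auto
    have bp: "batch_of Q i \<noteq> {}" "batch_of Q i \<subseteq> {1..N}" using batch_of_props[OF Q pil(2)] by auto
    have m1: "(\<lambda>w. x w p) \<in> borel_measurable M'" using comp_meas[OF x p] .
    have m2: "(\<lambda>w. e w p) \<in> borel_measurable M'" using comp_meas[OF e p] .
    have m3: "(\<lambda>w. wavg \<omega> (batch_of Q (fst p)) (x w) (snd p)) \<in> borel_measurable M'"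
      using wavg_meas[OF x bp pil(3)] pil(1) by simp
    show "F p \<in> borel_measurable M'" unfolding F_def using m1 m2 m3 by measurable
  qed
  then show ?thesis using eq by (simp add: config_space_def)
qed

lemma step_meas:
  assumes Bf: "Bf \<in> measurable M' (count_space AA)" and e: "e \<in> measurable M' CS" and x: "x \<in> measurable M' CS"
  shows "(\<lambda>w. cbo_step N d \<gamma> \<omega> (Bf w) (e w) (x w)) \<in> measurable M' CS"
  by (rule measurable_compose_countable'[OF step_fixed_meas[OF _ e x] Bf])
     (auto intro: countable_finite admissible_finite)

lemma traj_meas:
  assumes X: "X0 \<in> measurable M' CS"
    and BB: "\<And>k. k < n \<Longrightarrow> B k \<in> measurable M' (count_space AA)"
    and EE: "\<And>k. k < n \<Longrightarrow> \<eta> k \<in> measurable M' CS"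
  shows "(\<lambda>w. Xt w n) \<in> measurable M' CS"
  using BB EE
proof (induction n)
  case 0 then show ?case using X by (simp add: Xt_0)
next
  case (Suc n)
  have "(\<lambda>w. Xt w n) \<in> measurable M' CS" using Suc by auto
  then show ?case unfolding Xt_Suc using Suc.prems by (intro step_meas) auto
qed

definition "Inow n = insert SrcX0 (SrcB ` {..<n} \<union> SrcEta ` {..<n})"

lemma Xt_sub: "(\<lambda>w. Xt w n) \<in> measurable (Msub (Inow n)) CS"
  by (rule traj_meas) (auto simp: Inow_def intro!: X0_sub B_sub eta_sub)

lemma Xt_meas: "(\<lambda>w. Xt w n) \<in> measurable M CS"
  using Msub_meas_M[OF Xt_sub] .

lemma Xt_space: "w \<in> space M \<Longrightarrow> Xt w n \<in> space CS"
  using measurable_space[OF Xt_meas] by blast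

lemma B_space: "w \<in> space M \<Longrightarrow> B n w \<in> AA"
  using measurable_space[OF B_meas] by auto

lemma diam_meas:
  assumes x: "x \<in> measurable M' CS" and l: "l \<in> {1..d}"
  shows "(\<lambda>w. diam_coord N (x w) l) \<in> borel_measurable M'"
  unfolding diam_coord_def
  by (intro borel_measurable_diff borel_measurable_Max borel_measurable_Min finite_atLeastAtMost)
     (use comp_meas[OF x] l in auto)

definition "Dl l n w = diam_coord N (Xt w n) l"
definition "Sg l n w = (\<Sum>i\<in>{1..N}. \<bar>\<eta> n w (i,l)\<bar>)"

lemma Dl_sub: "l \<in> {1..d} \<Longrightarrow> Dl l n \<in> borel_measurable (Msub (Inow n))"
  unfolding Dl_def[abs_def] by (rule diam_meas[OF Xt_sub])

lemma Sg_sub: "l \<in> {1..d} \<Longrightarrow> Sg l n \<in> borel_measurable (Msub {SrcEta n})"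
  unfolding Sg_def[abs_def]
  by (intro borel_measurable_sum borel_measurable_abs) (use comp_meas[OF eta_sub[of n "{SrcEta n}"]] in auto)

lemma step_formula:
  assumes "i \<in> {1..N}" "l \<in> {1..d}"
  shows "cbo_step N d \<gamma> \<omega> Q e x (i,l) = (1-\<gamma>) * x (i,l) + \<gamma> * wavg \<omega> (batch_of Q i) x l
     + (- (x (i,l) - wavg \<omega> (batch_of Q i) x l) * e (i,l))"
  using assms by (simp add: cbo_step_def algebra_simps)

end

context rbs begin

definition "aa w n l k i = Xt w (n+k) (i,l)"
definition "cc w n l k i = wavg \<omega> (batch_of (B (n+k) w) i) (Xt w (n+k)) l"
definition "rr w n l k i = - (aa w n l k i - cc w n l k i) * \<eta> (n+k) w (i,l)"
definition "ee w n l k = Sg l (n+k) w * Dl l (n+k) w"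

lemma Dl_aa: "Dl l (n+k) w = Max (aa w n l k ` {1..N}) - Min (aa w n l k ` {1..N})"
  unfolding Dl_def diam_coord_def aa_def by (simp add: image_image)

lemma Dl_nn: "0 \<le> Dl l n w"
proof -
  have "Min (aa w n l 0 ` {1..N}) \<le> aa w n l 0 1" "aa w n l 0 1 \<le> Max (aa w n l 0 ` {1..N})"
    using N2 by (auto intro!: Min_le Max_ge)
  then show ?thesis using Dl_aa[of l n 0 w] by simp
qed

lemma Sg_nn: "0 \<le> Sg l n w" unfolding Sg_def by (simp add: sum_nonneg)

lemma blk_inst:
  assumes w: "w \<in> space M" and l: "l \<in> {1..d}"
  shows "blk {1..N} \<gamma> (aa w n l) (cc w n l) (rr w n l) (ee w n l)"
proof
  show "finite {1..N}" by simp
  show "{1..N} \<noteq> {}" using N2 by auto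
  show "0 < \<gamma>" "\<gamma> < 1" using g0 g1 .
next
  fix k i assume i: "i \<in> {1..N}"
  show "aa w n l (Suc k) i = (1-\<gamma>) * aa w n l k i + \<gamma> * cc w n l k i + rr w n l k i"
    unfolding aa_def cc_def rr_def using step_formula[OF i l] by (simp add: Xt_Suc)
next
  fix k i assume i: "i \<in> {1..N}"
  let ?Q = "B (n+k) w"
  have Q: "?Q \<in> AA" using B_space[OF w] .
  have bp: "batch_of ?Q i \<noteq> {}" "batch_of ?Q i \<subseteq> {1..N}" using batch_of_props[OF Q i] by auto
  have wp: "(\<forall>j\<in>{1..N}. \<omega> (batch_of ?Q i) j (Xt w (n+k)) \<ge> 0) \<and> (\<Sum>j\<in>batch_of ?Q i. \<omega> (batch_of ?Q i) j (Xt w (n+k))) = 1"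
    using w_props[OF bp Xt_space[OF w]] .
  have "(MIN j\<in>{1..N}. Xt w (n+k) (j,l)) \<le> cc w n l k i \<and> cc w n l k i \<le> (MAX j\<in>{1..N}. Xt w (n+k) (j,l))"
    unfolding cc_def using wp bp by (intro wavg_hull) auto
  then show "Min (aa w n l k ` {1..N}) \<le> cc w n l k i \<and> cc w n l k i \<le> Max (aa w n l k ` {1..N})"
    by (simp add: aa_def image_image)
  note hl = this
  have ai: "Min (aa w n l k ` {1..N}) \<le> aa w n l k i" "aa w n l k i \<le> Max (aa w n l k ` {1..N})"
    using i by (auto intro!: Min_le Max_ge)
  have "\<bar>aa w n l k i - cc w n l k i\<bar> \<le> Dl l (n+k) w" using Dl_aa[of l n k w] hl ai by linarith
  moreover have "\<bar>\<eta> (n+k) w (i,l)\<bar> \<le> Sg l (n+k) w"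
    unfolding Sg_def using i by (intro member_le_sum) auto
  ultimately have "\<bar>aa w n l k i - cc w n l k i\<bar> * \<bar>\<eta> (n+k) w (i,l)\<bar> \<le> Dl l (n+k) w * Sg l (n+k) w"
    by (intro mult_mono) auto
  then show "\<bar>rr w n l k i\<bar> \<le> ee w n l k"
    unfolding rr_def ee_def by (simp add: abs_mult mult.commute abs_minus_commute)
qed

lemma D_general:
  assumes w: "w \<in> space M" and l: "l \<in> {1..d}"
  shows "Dl l (n+k) w \<le> Dl l n w + 2 * (\<Sum>s<k. Sg l (n+s) w * Dl l (n+s) w)"
proof -
  interpret b: blk "{1..N}" \<gamma> "aa w n l" "cc w n l" "rr w n l" "ee w n l" using blk_inst[OF w l] .
  have "b.hi - b.lo = Dl l n w" proof -
    have "b.hi = Max (aa w n l 0 ` {1..N})" "b.lo = Min (aa w n l 0 ` {1..N})"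
      unfolding b.hi_def b.lo_def by simp_all
    then show ?thesis using Dl_aa[of l n 0 w] by simp
  qed
  then show ?thesis using b.diam_general[of k] Dl_aa[of l n k w] by (simp add: b.E_def ee_def)
qed

lemma D_one:
  assumes w: "w \<in> space M" and l: "l \<in> {1..d}"
  shows "Dl l (Suc n) w \<le> Dl l n w * (1 + 2 * Sg l n w)"
  using D_general[OF w l, of n 1] by (simp add: algebra_simps)

lemma D_cov:
  assumes w: "w \<in> space M" and l: "l \<in> {1..d}"
    and Pt: "\<forall>k\<in>{1..m}. Pt k \<in> AA"
    and cover: "\<forall>i\<in>{1..N}. \<forall>j\<in>{1..N}. \<exists>k\<in>{1..m}. \<exists>S\<in>Pt k. i \<in> S \<and> j \<in> S"
    and hit: "\<forall>s<m. B (n+s) w = Pt (Suc s)"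
  shows "Dl l (n+m) w \<le> (1 - \<gamma> * (1-\<gamma>)^m) * Dl l n w + 2 * m * (\<Sum>s<m. Sg l (n+s) w * Dl l (n+s) w)"
proof -
  interpret b: blk "{1..N}" \<gamma> "aa w n l" "cc w n l" "rr w n l" "ee w n l" using blk_inst[OF w l] .
  have hl: "b.hi - b.lo = Dl l n w" proof -
    have "b.hi = Max (aa w n l 0 ` {1..N})" "b.lo = Min (aa w n l 0 ` {1..N})"
      unfolding b.hi_def b.lo_def by simp_all
    then show ?thesis using Dl_aa[of l n 0 w] by simp
  qed
  have meet: "\<forall>i\<in>{1..N}. \<forall>j\<in>{1..N}. \<exists>s0<m. cc w n l s0 i = cc w n l s0 j"
  proof (intro ballI)
    fix i j assume i: "i \<in> {1..N}" and j: "j \<in> {1..N}"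
    obtain k S where k: "k \<in> {1..m}" "S \<in> Pt k" "i \<in> S" "j \<in> S" using cover i j by blast
    have Pk: "Pt k \<in> AA" using Pt k(1) by blast
    have km: "k - 1 < m" "Suc (k - 1) = k" using k(1) by auto
    have hk: "B (n + (k - 1)) w = Pt k" using hit km by metis
    have "batch_of (Pt k) i = S" "batch_of (Pt k) j = S" using batch_of_eq[OF Pk k(2)] k by auto
    then have "cc w n l (k-1) i = cc w n l (k-1) j" unfolding cc_def using hk by simp
    moreover have "k - 1 < m" using k(1) by auto
    ultimately show "\<exists>s0<m. cc w n l s0 i = cc w n l s0 j" by blast
  qed
  show ?thesis using b.diam_meet[OF meet] hl Dl_aa[of l n m w] by (simp add: b.E_def ee_def)
qed

end

context rbs begin

lemma abs_le_amgm: "0 < z \<Longrightarrow> \<bar>x::real\<bar> \<le> z/2 + x^2/(2*z)"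
proof -
  assume z: "0 < z"
  have "0 \<le> (\<bar>x\<bar> - z)^2" by simp
  then have "2 * z * \<bar>x\<bar> \<le> z^2 + x^2" by (simp add: power2_eq_square algebra_simps)
  then have "\<bar>x\<bar> \<le> (z^2 + x^2) / (2*z)" using z by (simp add: field_simps)
  also have "\<dots> = z/2 + x^2/(2*z)" using z by (simp add: field_simps power2_eq_square)
  finally show ?thesis .
qed

lemma eta_abs_int:
  assumes z: "0 < z" "\<zeta> \<le> z" and i: "i \<in> {1..N}" and l: "l \<in> {1..d}"
  shows "(\<integral>\<^sup>+ w. ennreal \<bar>\<eta> n w (i,l)\<bar> \<partial>M) \<le> ennreal z"
proof -
  have m: "(\<lambda>w. \<eta> n w (i,l)) \<in> borel_measurable M" using comp_meas[OF eta_meas] i l by simp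
  have "(\<integral>\<^sup>+ w. ennreal \<bar>\<eta> n w (i,l)\<bar> \<partial>M) \<le> (\<integral>\<^sup>+ w. ennreal (z/2) + ennreal (1/(2*z)) * ennreal ((\<eta> n w (i,l))^2) \<partial>M)"
  proof (rule nn_integral_mono)
    fix w
    have "ennreal \<bar>\<eta> n w (i,l)\<bar> \<le> ennreal (z/2 + (1/(2*z)) * (\<eta> n w (i,l))^2)"
      using abs_le_amgm[OF z(1), of "\<eta> n w (i,l)"] by (intro ennreal_leI) simp
    also have "\<dots> = ennreal (z/2) + ennreal ((1/(2*z)) * (\<eta> n w (i,l))^2)"
      by (rule ennreal_plus) (use z in auto)
    also have "ennreal ((1/(2*z)) * (\<eta> n w (i,l))^2) = ennreal (1/(2*z)) * ennreal ((\<eta> n w (i,l))^2)"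
      using z by (intro ennreal_mult') simp
    finally show "ennreal \<bar>\<eta> n w (i,l)\<bar> \<le> ennreal (z/2) + ennreal (1/(2*z)) * ennreal ((\<eta> n w (i,l))^2)" .
  qed
  also have "\<dots> = ennreal (z/2) + ennreal (1/(2*z)) * (\<integral>\<^sup>+ w. ennreal ((\<eta> n w (i,l))^2) \<partial>M)"
    using m by (simp add: nn_integral_add nn_integral_cmult emeasure_space_1)
  also have "\<dots> \<le> ennreal (z/2) + ennreal (1/(2*z)) * ennreal (\<zeta>^2)"
    using eta_mom[OF i l, of n] by (intro add_left_mono mult_left_mono) auto
  also have "ennreal (1/(2*z)) * ennreal (\<zeta>^2) = ennreal ((1/(2*z)) * \<zeta>^2)"
    using z by (intro ennreal_mult'[symmetric]) simp
  also have "ennreal (z/2) + ennreal ((1/(2*z)) * \<zeta>^2) = ennreal (z/2 + (1/(2*z)) * \<zeta>^2)"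
    by (rule ennreal_plus[symmetric]) (use z in auto)
  also have "\<dots> \<le> ennreal z"
  proof (rule ennreal_leI)
    have "\<zeta>^2 \<le> z^2" using z z0 by (intro power_mono) auto
    then have "(1/(2*z)) * \<zeta>^2 \<le> (1/(2*z)) * z^2" using z by (intro mult_left_mono) auto
    also have "\<dots> = z/2" using z by (simp add: power2_eq_square field_simps)
    finally show "z/2 + (1/(2*z)) * \<zeta>^2 \<le> z" by simp
  qed
  finally show ?thesis .
qed

lemma Sg_int:
  fixes z :: real
  assumes z: "0 < z" "\<zeta> \<le> z" and l: "l \<in> {1..d}"
  shows "(\<integral>\<^sup>+ w. ennreal (Sg l n w) \<partial>M) \<le> ennreal (N * z)"
proof -
  have "(\<integral>\<^sup>+ w. ennreal (Sg l n w) \<partial>M) = (\<integral>\<^sup>+ w. (\<Sum>i\<in>{1..N}. ennreal \<bar>\<eta> n w (i,l)\<bar>) \<partial>M)"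
    unfolding Sg_def by (simp add: sum_ennreal)
  also have "\<dots> = (\<Sum>i\<in>{1..N}. \<integral>\<^sup>+ w. ennreal \<bar>\<eta> n w (i,l)\<bar> \<partial>M)"
    using comp_meas[OF eta_meas] l by (intro nn_integral_sum) auto
  also have "\<dots> \<le> (\<Sum>i\<in>{1..N}. ennreal z)"
    using eta_abs_int[OF z _ l] by (intro sum_mono) auto
  also have "\<dots> = ennreal (N * z)" using z by (simp add: ennreal_mult ennreal_of_nat_eq_real_of_nat)
  finally show ?thesis .
qed

definition "covset Pt m n = {w \<in> space M. \<forall>s<m. B (n+s) w = Pt (Suc s)}"

lemma covset_prob:
  assumes Pt: "\<forall>k\<in>{1..m}. Pt k \<in> AA" and m: "m > 0"
  shows "prob (covset Pt m n) = (1 / real (card AA)) ^ m"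
proof -
  define J where "J = SrcB ` {n..<n+m}"
  define A where "A j = (case j of SrcB k \<Rightarrow> B k -` {Pt (Suc (k - n))} \<inter> space M | _ \<Rightarrow> {})" for j
  have ind: "prob (\<Inter>j\<in>J. A j) = (\<Prod>j\<in>J. prob (A j))"
  proof (rule indep_setsD[OF indep_all])
    show "J \<subseteq> UNIV" "J \<noteq> {}" "finite J" using m by (auto simp: J_def)
    show "\<forall>j\<in>J. A j \<in> Ecl j"
    proof
      fix j assume "j \<in> J"
      then obtain k where k: "j = SrcB k" "k \<in> {n..<n+m}" by (auto simp: J_def)
      have Q: "{Pt (Suc (k - n))} \<in> sets (count_space AA)" using Pt k(2) by auto
      have "A j = B k -` {Pt (Suc (k - n))} \<inter> space M" unfolding k(1) A_def by simp
      then show "A j \<in> Ecl j" unfolding k(1) Ecl_B using Q by blast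
    qed
  qed
  have "(\<Inter>j\<in>J. A j) = covset Pt m n"
  proof (rule set_eqI)
    fix w
    have "w \<in> (\<Inter>j\<in>J. A j) \<longleftrightarrow> (\<forall>k\<in>{n..<n+m}. w \<in> space M \<and> B k w = Pt (Suc (k - n)))"
    proof
      assume "w \<in> (\<Inter>j\<in>J. A j)" then show "\<forall>k\<in>{n..<n+m}. w \<in> space M \<and> B k w = Pt (Suc (k - n))"
        by (auto simp: J_def A_def)
    next
      assume H: "\<forall>k\<in>{n..<n+m}. w \<in> space M \<and> B k w = Pt (Suc (k - n))"
      have "n \<in> {n..<n+m}" using m by simp
      then have "w \<in> space M" using H by blast
      then show "w \<in> (\<Inter>j\<in>J. A j)" unfolding J_def A_def using H by auto
    qed
    also have "\<dots> \<longleftrightarrow> w \<in> covset Pt m n"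
    proof
      assume H: "\<forall>k\<in>{n..<n+m}. w \<in> space M \<and> B k w = Pt (Suc (k - n))"
      have "n \<in> {n..<n+m}" using m by simp
      then have "w \<in> space M" using H by blast
      moreover have "\<forall>s<m. B (n+s) w = Pt (Suc s)"
      proof (intro allI impI)
        fix s assume "s < m"
        then have "n + s \<in> {n..<n+m}" by simp
        then show "B (n+s) w = Pt (Suc s)" using H by fastforce
      qed
      ultimately show "w \<in> covset Pt m n" unfolding covset_def by simp
    next
      assume H: "w \<in> covset Pt m n"
      show "\<forall>k\<in>{n..<n+m}. w \<in> space M \<and> B k w = Pt (Suc (k - n))"
      proof
        fix k assume k: "k \<in> {n..<n+m}"
        then have km: "k - n < m" "n + (k - n) = k" by auto
        have "w \<in> space M \<and> B (n + (k - n)) w = Pt (Suc (k - n))" using H km(1) unfolding covset_def by blast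
        then show "w \<in> space M \<and> B k w = Pt (Suc (k - n))" using km(2) by simp
      qed
    qed
    finally show "w \<in> (\<Inter>j\<in>J. A j) \<longleftrightarrow> w \<in> covset Pt m n" .
  qed
  moreover have "(\<Prod>j\<in>J. prob (A j)) = (\<Prod>k\<in>{n..<n+m}. prob (A (SrcB k)))"
    unfolding J_def by (subst prod.reindex) (auto simp: inj_on_def)
  moreover have "\<And>k. k \<in> {n..<n+m} \<Longrightarrow> prob (A (SrcB k)) = 1 / real (card AA)"
  proof -
    fix k assume k: "k \<in> {n..<n+m}"
    have "A (SrcB k) = {w\<in>space M. B k w = Pt (Suc (k - n))}" by (auto simp: A_def)
    moreover have "Pt (Suc (k - n)) \<in> AA" using Pt k by auto
    ultimately show "prob (A (SrcB k)) = 1 / real (card AA)" using B_unif by simp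
  qed
  ultimately have "prob (covset Pt m n) = (\<Prod>k\<in>{n..<n+m}. 1 / real (card AA))"
    using ind by (metis (no_types, lifting) prod.cong)
  then show ?thesis by simp
qed

lemma covset_sets:
  assumes Pt: "\<forall>k\<in>{1..m}. Pt k \<in> AA"
  shows "covset Pt m n \<in> sets (Msub (SrcB ` {n..<n+m}))"
proof -
  have "covset Pt m n = {w \<in> space (Msub (SrcB ` {n..<n+m})). \<forall>s\<in>{..<m}. B (n+s) w = Pt (Suc s)}"
    unfolding covset_def by auto
  also have "\<dots> \<in> sets (Msub (SrcB ` {n..<n+m}))"
  proof (intro sets.sets_Collect_finite_All finite_lessThan)
    fix s assume s: "s \<in> {..<m}"
    have Bm: "B (n+s) \<in> measurable (Msub (SrcB ` {n..<n+m})) (count_space AA)"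
      using s by (intro B_sub) auto
    have Q: "{Pt (Suc s)} \<in> sets (count_space AA)" using Pt s by auto
    have eq: "{w \<in> space (Msub (SrcB ` {n..<n+m})). B (n+s) w = Pt (Suc s)}
       = B (n+s) -` {Pt (Suc s)} \<inter> space (Msub (SrcB ` {n..<n+m}))" by auto
    show "{w \<in> space (Msub (SrcB ` {n..<n+m})). B (n+s) w = Pt (Suc s)} \<in> sets (Msub (SrcB ` {n..<n+m}))"
      unfolding eq by (rule measurable_sets[OF Bm Q])
  qed
  finally show ?thesis .
qed

end

locale rbs2 = rbs +
  fixes m0 :: nat and Pt :: "nat \<Rightarrow> nat set set" and z :: real
  assumes m0: "m0 > 0" and Pt: "\<forall>k\<in>{1..m0}. Pt k \<in> admissible N P"
    and cover: "\<forall>i\<in>{1..N}. \<forall>j\<in>{1..N}. \<exists>k\<in>{1..m0}. \<exists>S\<in>Pt k. i \<in> S \<and> j \<in> S"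
    and zpos: "0 < z" and zeta_z: "\<zeta> \<le> z"
    and zA: "N * z \<le> 1/2"
    and zB: "2 * m0^2 * 2^m0 * N * z \<le> (\<gamma> * (1-\<gamma>)^m0 * (1 / real (card (admissible N P)))^m0) / 2"
    and zC: "N * z \<le> \<gamma>"
begin

definition "\<delta> = \<gamma> * (1-\<gamma>)^m0"
definition "pc = (1 / real (card AA))^m0"
definition "gg = 1 + 2 * N * z"
definition "\<rho> = 1 - \<delta> * pc / 2"

lemma AA_ne: "AA \<noteq> {}"
proof -
  have "Pt 1 \<in> AA" using Pt m0 by auto
  then show ?thesis by blast
qed
lemma card_AA: "card AA > 0" using AA_ne admissible_finite by (simp add: card_gt_0_iff)

lemma delta_bounds: "0 < \<delta>" "\<delta> \<le> 1"
proof -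
  show "0 < \<delta>" unfolding \<delta>_def using g0 g1 by simp
  have "(1-\<gamma>)^m0 \<le> 1" using g0 g1 by (intro power_le_one) auto
  then have "\<gamma> * (1-\<gamma>)^m0 \<le> 1 * 1" using g0 g1 by (intro mult_mono) auto
  then show "\<delta> \<le> 1" unfolding \<delta>_def by simp
qed

lemma pc_bounds: "0 < pc" "pc \<le> 1"
proof -
  have c: "1 \<le> real (card AA)" using card_AA by simp
  show "0 < pc" unfolding pc_def using card_AA by simp
  have "1 / real (card AA) \<le> 1" using c by simp
  then show "pc \<le> 1" unfolding pc_def using c by (intro power_le_one) auto
qed

lemma rho_bounds: "0 < \<rho>" "\<rho> < 1"
proof -
  have "\<delta> * pc \<le> 1 * 1" using delta_bounds pc_bounds by (intro mult_mono) auto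
  moreover have "0 < \<delta> * pc" using delta_bounds pc_bounds by simp
  ultimately show "0 < \<rho>" "\<rho> < 1" unfolding \<rho>_def by auto
qed

lemma gg_bounds: "1 \<le> gg" "gg \<le> 2"
  unfolding gg_def using zA zpos by auto

abbreviation "ED \<phi> l n \<equiv> (\<integral>\<^sup>+ w. \<phi> w * ennreal (Dl l n w) \<partial>M)"

lemma fac:
  assumes \<phi>: "\<phi> \<in> borel_measurable (Msub {SrcX0})" and l: "l \<in> {1..d}"
    and g: "g \<in> borel_measurable (Msub J)" and J: "J \<inter> Inow n = {}"
  shows "(\<integral>\<^sup>+ w. (\<phi> w * ennreal (Dl l n w)) * g w \<partial>M) = ED \<phi> l n * (\<integral>\<^sup>+ w. g w \<partial>M)"
proof -
  have "(\<lambda>w. \<phi> w * ennreal (Dl l n w)) \<in> borel_measurable (Msub (Inow n))"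
  proof (rule borel_measurable_times_ennreal)
    show "\<phi> \<in> borel_measurable (Msub (Inow n))" by (rule Msub_mono[OF _ \<phi>]) (auto simp: Inow_def)
    show "(\<lambda>w. ennreal (Dl l n w)) \<in> borel_measurable (Msub (Inow n))"
      using Dl_sub[OF l] by simp
  qed
  then show ?thesis using indep_prod[of "Inow n" J] J g by (auto simp: Int_commute)
qed

lemma Sg1_int: assumes l: "l \<in> {1..d}"
  shows "(\<integral>\<^sup>+ w. ennreal (1 + 2 * Sg l n w) \<partial>M) \<le> ennreal gg"
proof -
  have m: "(\<lambda>w. ennreal (Sg l n w)) \<in> borel_measurable M"
    using Msub_meas_M[OF Sg_sub[OF l]] by simp
  have "(\<integral>\<^sup>+ w. ennreal (1 + 2 * Sg l n w) \<partial>M) = (\<integral>\<^sup>+ w. 1 + 2 * ennreal (Sg l n w) \<partial>M)"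
    using Sg_nn by (intro nn_integral_cong) (simp add: ennreal_plus ennreal_mult)
  also have "\<dots> = 1 + 2 * (\<integral>\<^sup>+ w. ennreal (Sg l n w) \<partial>M)"
    using m by (simp add: nn_integral_add nn_integral_cmult emeasure_space_1)
  also have "\<dots> \<le> 1 + 2 * ennreal (N * z)"
    using Sg_int[OF zpos zeta_z l] by (intro add_left_mono mult_left_mono) auto
  also have "\<dots> = ennreal gg" unfolding gg_def using zpos
    by (simp add: ennreal_plus ennreal_mult mult.assoc)
  finally show ?thesis .
qed

lemma ED_step:
  assumes \<phi>: "\<phi> \<in> borel_measurable (Msub {SrcX0})" and l: "l \<in> {1..d}"
  shows "ED \<phi> l (Suc n) \<le> ED \<phi> l n * ennreal gg"
proof -
  have "ED \<phi> l (Suc n) \<le> (\<integral>\<^sup>+ w. (\<phi> w * ennreal (Dl l n w)) * ennreal (1 + 2 * Sg l n w) \<partial>M)"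
  proof (rule nn_integral_mono)
    fix w assume w: "w \<in> space M"
    have "ennreal (Dl l (Suc n) w) \<le> ennreal (Dl l n w * (1 + 2 * Sg l n w))"
      using D_one[OF w l] by (rule ennreal_leI)
    also have "\<dots> = ennreal (Dl l n w) * ennreal (1 + 2 * Sg l n w)"
      using Dl_nn Sg_nn by (intro ennreal_mult) auto
    finally show "\<phi> w * ennreal (Dl l (Suc n) w) \<le> (\<phi> w * ennreal (Dl l n w)) * ennreal (1 + 2 * Sg l n w)"
      by (simp add: mult.assoc mult_left_mono)
  qed
  also have "\<dots> = ED \<phi> l n * (\<integral>\<^sup>+ w. ennreal (1 + 2 * Sg l n w) \<partial>M)"
  proof (rule fac[OF \<phi> l])
    show "(\<lambda>w. ennreal (1 + 2 * Sg l n w)) \<in> borel_measurable (Msub {SrcEta n})"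
      using Sg_sub[OF l] by measurable
    show "{SrcEta n} \<inter> Inow n = {}" by (auto simp: Inow_def)
  qed
  also have "\<dots> \<le> ED \<phi> l n * ennreal gg"
    using Sg1_int[OF l] by (intro mult_left_mono) auto
  finally show ?thesis .
qed

lemma ED_steps:
  assumes \<phi>: "\<phi> \<in> borel_measurable (Msub {SrcX0})" and l: "l \<in> {1..d}"
  shows "ED \<phi> l (n+s) \<le> ED \<phi> l n * ennreal (gg^s)"
proof (induction s)
  case 0 then show ?case by simp
next
  case (Suc s)
  have "ED \<phi> l (n + Suc s) \<le> ED \<phi> l (n+s) * ennreal gg" using ED_step[OF \<phi> l, of "n+s"] by simp
  also have "\<dots> \<le> ED \<phi> l n * ennreal (gg^s) * ennreal gg" using Suc by (intro mult_right_mono) auto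
  also have "\<dots> = ED \<phi> l n * ennreal (gg^Suc s)"
  proof -
    have "ennreal (gg^Suc s) = ennreal (gg^s) * ennreal gg"
      using gg_bounds by (simp add: ennreal_mult' mult.commute)
    then show ?thesis by (simp add: mult.assoc)
  qed
  finally show ?case .
qed

end

context rbs2 begin

abbreviation "CV n \<equiv> covset Pt m0 n"

lemma CV_sets: "CV n \<in> sets M"
  using covset_sets[OF Pt, of n] subalg_Msub unfolding subalgebra_def by blast

lemma h_int: "(\<integral>\<^sup>+ w. ennreal (1 - \<delta> * indicator (CV n) w) \<partial>M) = ennreal (1 - \<delta> * pc)"
proof -
  have int: "integrable M (\<lambda>w. 1 - \<delta> * indicator (CV n) w)"
    using CV_sets[of n] by (intro Bochner_Integration.integrable_diff integrable_const Bochner_Integration.integrable_mult_right integrable_real_indicator) (auto simp: emeasure_eq_measure)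
  have nn: "AE w in M. 0 \<le> 1 - \<delta> * indicator (CV n) w"
    using delta_bounds by (auto simp: indicator_def)
  have "(\<integral>\<^sup>+ w. ennreal (1 - \<delta> * indicator (CV n) w) \<partial>M) = ennreal (\<integral>w. 1 - \<delta> * indicator (CV n) w \<partial>M)"
    by (rule nn_integral_eq_integral[OF int nn])
  also have "(\<integral>w. 1 - \<delta> * indicator (CV n) w \<partial>M) = 1 - \<delta> * prob (CV n)"
    using CV_sets[of n] by (subst Bochner_Integration.integral_diff)
       (auto intro!: integrable_real_indicator simp: prob_space emeasure_eq_measure)
  also have "prob (CV n) = pc" unfolding pc_def using covset_prob[OF Pt m0] .
  finally show ?thesis .
qed

lemma block_pw:
  assumes w: "w \<in> space M" and l: "l \<in> {1..d}"
  shows "Dl l (n+m0) w \<le> Dl l n w * (1 - \<delta> * indicator (CV n) w)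
          + 2 * m0 * (\<Sum>s<m0. Sg l (n+s) w * Dl l (n+s) w)"
proof (cases "w \<in> CV n")
  case True
  then have hit: "\<forall>s<m0. B (n+s) w = Pt (Suc s)" unfolding covset_def by auto
  show ?thesis using D_cov[OF w l Pt cover hit] True by (simp add: \<delta>_def mult.commute)
next
  case False
  have "0 \<le> (\<Sum>s<m0. Sg l (n+s) w * Dl l (n+s) w)"
    by (intro sum_nonneg mult_nonneg_nonneg Sg_nn Dl_nn)
  then have "2 * (\<Sum>s<m0. Sg l (n+s) w * Dl l (n+s) w) \<le> 2 * m0 * (\<Sum>s<m0. Sg l (n+s) w * Dl l (n+s) w)"
    using m0 by (intro mult_right_mono) auto
  then show ?thesis using D_general[OF w l, of n m0] False by simp
qed

lemma ED_block:
  assumes \<phi>: "\<phi> \<in> borel_measurable (Msub {SrcX0})" and l: "l \<in> {1..d}"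
  shows "ED \<phi> l (n+m0) \<le> ED \<phi> l n * ennreal \<rho>"
proof -
  have \<phi>M: "\<phi> \<in> borel_measurable M" using Msub_meas_M[OF \<phi>] .
  have DM: "\<And>k. (\<lambda>w. ennreal (Dl l k w)) \<in> borel_measurable M" using Msub_meas_M[OF Dl_sub[OF l]] by simp
  have SM: "\<And>k. (\<lambda>w. ennreal (Sg l k w)) \<in> borel_measurable M" using Msub_meas_M[OF Sg_sub[OF l]] by simp
  have hM: "(\<lambda>w. ennreal (1 - \<delta> * indicator (CV n) w)) \<in> borel_measurable (Msub (SrcB ` {n..<n+m0}))"
    using covset_sets[OF Pt, of n] by measurable
  let ?h = "\<lambda>w. ennreal (1 - \<delta> * indicator (CV n) w)"
  let ?T = "\<lambda>s w. ennreal (2 * m0) * ((\<phi> w * ennreal (Dl l (n+s) w)) * ennreal (Sg l (n+s) w))"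
  have "ED \<phi> l (n+m0) \<le> (\<integral>\<^sup>+ w. (\<phi> w * ennreal (Dl l n w)) * ?h w + (\<Sum>s<m0. ?T s w) \<partial>M)"
  proof (rule nn_integral_mono)
    fix w assume w: "w \<in> space M"
    have h0: "0 \<le> 1 - \<delta> * indicator (CV n) w" using delta_bounds by (auto simp: indicator_def)
    have t0: "\<And>s. 0 \<le> Sg l (n+s) w * Dl l (n+s) w" by (intro mult_nonneg_nonneg Sg_nn Dl_nn)
    have "ennreal (Dl l (n+m0) w) \<le> ennreal (Dl l n w * (1 - \<delta> * indicator (CV n) w)
          + 2 * m0 * (\<Sum>s<m0. Sg l (n+s) w * Dl l (n+s) w))"
      using block_pw[OF w l] by (rule ennreal_leI)
    also have "\<dots> = ennreal (Dl l n w) * ?h w + (\<Sum>s<m0. ennreal (2 * m0) * (ennreal (Dl l (n+s) w) * ennreal (Sg l (n+s) w)))"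
    proof -
      have a: "ennreal (Dl l n w * (1 - \<delta> * indicator (CV n) w)) = ennreal (Dl l n w) * ?h w"
        using Dl_nn h0 by (intro ennreal_mult) auto
      have b: "ennreal (2 * m0 * (\<Sum>s<m0. Sg l (n+s) w * Dl l (n+s) w))
         = (\<Sum>s<m0. ennreal (2 * m0) * (ennreal (Dl l (n+s) w) * ennreal (Sg l (n+s) w)))"
      proof -
        have "ennreal (2 * m0 * (\<Sum>s<m0. Sg l (n+s) w * Dl l (n+s) w))
            = ennreal (\<Sum>s<m0. 2 * m0 * (Sg l (n+s) w * Dl l (n+s) w))" by (simp add: sum_distrib_left)
        also have "\<dots> = (\<Sum>s<m0. ennreal (2 * m0 * (Sg l (n+s) w * Dl l (n+s) w)))"
          using t0 by (intro sum_ennreal[symmetric]) auto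
        also have "\<dots> = (\<Sum>s<m0. ennreal (2 * m0) * (ennreal (Dl l (n+s) w) * ennreal (Sg l (n+s) w)))"
          using Sg_nn Dl_nn by (intro sum.cong refl) (simp add: ennreal_mult mult.commute)
        finally show ?thesis .
      qed
      have c: "ennreal (Dl l n w * (1 - \<delta> * indicator (CV n) w) + 2 * m0 * (\<Sum>s<m0. Sg l (n+s) w * Dl l (n+s) w))
         = ennreal (Dl l n w * (1 - \<delta> * indicator (CV n) w)) + ennreal (2 * m0 * (\<Sum>s<m0. Sg l (n+s) w * Dl l (n+s) w))"
        using Dl_nn h0 t0 by (intro ennreal_plus) (auto intro!: sum_nonneg mult_nonneg_nonneg Sg_nn Dl_nn)
      show ?thesis using a b c by simp
    qed
    finally have "ennreal (Dl l (n+m0) w) \<le> ennreal (Dl l n w) * ?h w + (\<Sum>s<m0. ennreal (2 * m0) * (ennreal (Dl l (n+s) w) * ennreal (Sg l (n+s) w)))" .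
    then have "\<phi> w * ennreal (Dl l (n+m0) w) \<le> \<phi> w * (ennreal (Dl l n w) * ?h w + (\<Sum>s<m0. ennreal (2 * m0) * (ennreal (Dl l (n+s) w) * ennreal (Sg l (n+s) w))))"
      by (rule mult_left_mono) simp
    also have "\<dots> = (\<phi> w * ennreal (Dl l n w)) * ?h w + (\<Sum>s<m0. ?T s w)"
      by (simp add: distrib_left sum_distrib_left mult.assoc mult.left_commute)
    finally show "\<phi> w * ennreal (Dl l (n+m0) w) \<le> (\<phi> w * ennreal (Dl l n w)) * ?h w + (\<Sum>s<m0. ?T s w)" .
  qed
  also have "\<dots> = (\<integral>\<^sup>+ w. (\<phi> w * ennreal (Dl l n w)) * ?h w \<partial>M) + (\<Sum>s<m0. \<integral>\<^sup>+ w. ?T s w \<partial>M)"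
    using \<phi>M DM SM Msub_meas_M[OF hM] by (simp add: nn_integral_add nn_integral_sum)
  also have "(\<integral>\<^sup>+ w. (\<phi> w * ennreal (Dl l n w)) * ?h w \<partial>M) = ED \<phi> l n * ennreal (1 - \<delta> * pc)"
  proof -
    have "SrcB ` {n..<n+m0} \<inter> Inow n = {}" by (auto simp: Inow_def)
    then show ?thesis using fac[OF \<phi> l hM, of n] h_int[of n] by simp
  qed
  also have "(\<Sum>s<m0. \<integral>\<^sup>+ w. ?T s w \<partial>M) \<le> (\<Sum>s<m0. ED \<phi> l n * ennreal (2 * m0 * (2^m0 * (N * z))))"
  proof (rule sum_mono)
    fix s assume s: "s \<in> {..<m0}"
    have "(\<integral>\<^sup>+ w. ?T s w \<partial>M) = ennreal (2 * m0) * (\<integral>\<^sup>+ w. (\<phi> w * ennreal (Dl l (n+s) w)) * ennreal (Sg l (n+s) w) \<partial>M)"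
      using \<phi>M DM SM by (simp add: nn_integral_cmult)
    also have "(\<integral>\<^sup>+ w. (\<phi> w * ennreal (Dl l (n+s) w)) * ennreal (Sg l (n+s) w) \<partial>M)
       = ED \<phi> l (n+s) * (\<integral>\<^sup>+ w. ennreal (Sg l (n+s) w) \<partial>M)"
    proof -
      have "(\<lambda>w. ennreal (Sg l (n+s) w)) \<in> borel_measurable (Msub {SrcEta (n+s)})"
        using Sg_sub[OF l, of "n+s"] by measurable
      then show ?thesis by (rule fac[OF \<phi> l]) (auto simp: Inow_def)
    qed
    also have "\<dots> \<le> (ED \<phi> l n * ennreal (gg^s)) * ennreal (N * z)"
      using ED_steps[OF \<phi> l] Sg_int[OF zpos zeta_z l] by (intro mult_mono) auto
    also have "ennreal (gg^s) \<le> ennreal (2^m0)"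
    proof (rule ennreal_leI)
      have "gg^s \<le> 2^s" using gg_bounds by (intro power_mono) auto
      also have "(2::real)^s \<le> 2^m0" using s by (intro power_increasing) auto
      finally show "gg^s \<le> 2^m0" .
    qed
    then have "(ED \<phi> l n * ennreal (gg^s)) * ennreal (N * z) \<le> (ED \<phi> l n * ennreal (2^m0)) * ennreal (N * z)"
      by (intro mult_right_mono mult_left_mono) auto
    finally have "(\<integral>\<^sup>+ w. ?T s w \<partial>M) \<le> ennreal (2 * m0) * ((ED \<phi> l n * ennreal (2^m0)) * ennreal (N * z))"
      by (simp add: mult_left_mono)
    also have "\<dots> = ED \<phi> l n * ennreal (2 * m0 * (2^m0 * (N * z)))"
      using zpos by (simp add: ennreal_mult mult.assoc mult.left_commute ennreal_of_nat_eq_real_of_nat)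
    finally show "(\<integral>\<^sup>+ w. ?T s w \<partial>M) \<le> ED \<phi> l n * ennreal (2 * m0 * (2^m0 * (N * z)))" .
  qed
  also have "(\<Sum>s<m0. ED \<phi> l n * ennreal (2 * m0 * (2^m0 * (N * z)))) = ED \<phi> l n * ennreal (2 * m0^2 * 2^m0 * N * z)"
    using zpos by (simp add: ennreal_mult ennreal_of_nat_eq_real_of_nat power2_eq_square mult_ac)
  also have "ED \<phi> l n * ennreal (1 - \<delta> * pc) + ED \<phi> l n * ennreal (2 * m0^2 * 2^m0 * N * z)
      = ED \<phi> l n * ennreal (1 - \<delta> * pc + 2 * m0^2 * 2^m0 * N * z)"
  proof -
    have "\<delta> * pc \<le> 1 * 1" using delta_bounds pc_bounds by (intro mult_mono) auto
    then show ?thesis using zpos by (simp add: distrib_left[symmetric] ennreal_plus)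
  qed
  also have "\<dots> \<le> ED \<phi> l n * ennreal \<rho>"
    using zB by (intro mult_left_mono ennreal_leI) (auto simp: \<rho>_def \<delta>_def pc_def)
  finally show ?thesis by simp
qed

end

context rbs2 begin

definition "\<Lambda> = - ln \<rho> / m0"
definition "Cb = 2^m0 / \<rho>"

lemma Lam_pos: "0 < \<Lambda>"
proof -
  have "ln \<rho> < 0" using rho_bounds by simp
  then show ?thesis unfolding \<Lambda>_def using m0 by (simp add: divide_neg_pos)
qed

lemma Cb_pos: "0 < Cb" unfolding Cb_def using rho_bounds by simp

lemma ED_mult:
  assumes \<phi>: "\<phi> \<in> borel_measurable (Msub {SrcX0})" and l: "l \<in> {1..d}"
  shows "ED \<phi> l (k*m0 + r) \<le> ED \<phi> l r * ennreal (\<rho>^k)"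
proof (induction k)
  case 0 then show ?case by simp
next
  case (Suc k)
  have "ED \<phi> l (Suc k * m0 + r) = ED \<phi> l ((k*m0 + r) + m0)" by (simp add: algebra_simps)
  also have "\<dots> \<le> ED \<phi> l (k*m0 + r) * ennreal \<rho>" by (rule ED_block[OF \<phi> l])
  also have "\<dots> \<le> ED \<phi> l r * ennreal (\<rho>^k) * ennreal \<rho>" using Suc by (intro mult_right_mono) auto
  also have "\<dots> = ED \<phi> l r * ennreal (\<rho>^Suc k)"
  proof -
    have "ennreal (\<rho>^Suc k) = ennreal (\<rho>^k) * ennreal \<rho>"
      using rho_bounds by (simp add: ennreal_mult' mult.commute)
    then show ?thesis by (simp add: mult.assoc)
  qed
  finally show ?case .
qed

lemma rho_exp:
  "2^m0 * \<rho>^(n div m0) \<le> Cb * exp (- \<Lambda> * n)"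
proof -
  let ?q = "n div m0"
  have r0: "0 < \<rho>" "\<rho> \<le> 1" using rho_bounds by auto
  have "real n / m0 \<le> real (?q + 1)"
  proof -
    have e: "?q * m0 + n mod m0 = n" by (rule div_mult_mod_eq)
    have "n mod m0 < m0" using m0 by simp
    then have "n < ?q * m0 + m0" using e by linarith
    then have "real n < real (?q * m0 + m0)" by (simp only: of_nat_less_iff)
    then have "real n < real (?q+1) * m0" by (simp add: algebra_simps)
    then show ?thesis using m0 by (simp add: divide_le_eq less_imp_le)
  qed
  then have "\<rho> powr real (?q+1) \<le> \<rho> powr (real n / m0)" using r0 by (intro powr_mono') auto
  moreover have "\<rho> powr real (?q+1) = \<rho>^(?q+1)" using r0(1) by (rule powr_realpow)
  moreover have "exp (- \<Lambda> * n) = \<rho> powr (real n / m0)"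
    unfolding \<Lambda>_def powr_def using r0 by simp
  ultimately have "\<rho>^(?q+1) \<le> exp (- \<Lambda> * n)" by simp
  then have "\<rho>^?q * \<rho> \<le> exp (- \<Lambda> * n)" by (simp add: mult.commute)
  then have "\<rho>^?q \<le> exp (- \<Lambda> * n) / \<rho>" using r0 by (simp add: field_simps)
  then have "2^m0 * \<rho>^?q \<le> 2^m0 * (exp (- \<Lambda> * n) / \<rho>)" by (intro mult_left_mono) auto
  then show ?thesis unfolding Cb_def by (simp add: field_simps)
qed

lemma ED_decay:
  assumes \<phi>: "\<phi> \<in> borel_measurable (Msub {SrcX0})" and l: "l \<in> {1..d}"
  shows "ED \<phi> l n \<le> ennreal (Cb * exp (- \<Lambda> * n)) * ED \<phi> l 0"
proof -
  let ?q = "n div m0" and ?r = "n mod m0"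
  have "ED \<phi> l n = ED \<phi> l (?q*m0 + ?r)" by simp
  also have "\<dots> \<le> ED \<phi> l ?r * ennreal (\<rho>^?q)" by (rule ED_mult[OF \<phi> l])
  also have "ED \<phi> l ?r \<le> ED \<phi> l 0 * ennreal (gg^?r)" using ED_steps[OF \<phi> l, of 0 ?r] by simp
  also have "ennreal (gg^?r) \<le> ennreal (2^m0)"
  proof (rule ennreal_leI)
    have "gg^?r \<le> 2^?r" using gg_bounds by (intro power_mono) auto
    also have "(2::real)^?r \<le> 2^m0" using m0 by (intro power_increasing) auto
    finally show "gg^?r \<le> 2^m0" .
  qed
  finally have "ED \<phi> l n \<le> ED \<phi> l 0 * ennreal (2^m0) * ennreal (\<rho>^?q)"
    by (simp add: mult_right_mono mult_left_mono)
  also have "\<dots> = ennreal (2^m0 * \<rho>^?q) * ED \<phi> l 0"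
    using rho_bounds by (simp add: ennreal_mult mult.commute mult.left_commute mult.assoc)
  also have "\<dots> \<le> ennreal (Cb * exp (- \<Lambda> * n)) * ED \<phi> l 0"
    using rho_exp by (intro mult_right_mono ennreal_leI) auto
  finally show ?thesis .
qed

definition "W l k w = (\<gamma> + Sg l k w) * Dl l k w"

lemma W_nn: "0 \<le> W l k w" unfolding W_def using g0 Sg_nn Dl_nn by simp

lemma W_meas: "l \<in> {1..d} \<Longrightarrow> (\<lambda>w. W l k w) \<in> borel_measurable M"
  unfolding W_def using Msub_meas_M[OF Sg_sub] Msub_meas_M[OF Dl_sub] by measurable

lemma EW:
  assumes \<phi>: "\<phi> \<in> borel_measurable (Msub {SrcX0})" and l: "l \<in> {1..d}"
  shows "(\<integral>\<^sup>+ w. \<phi> w * ennreal (W l k w) \<partial>M) \<le> ennreal (2 * \<gamma>) * ED \<phi> l k"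
proof -
  have "(\<integral>\<^sup>+ w. \<phi> w * ennreal (W l k w) \<partial>M) = (\<integral>\<^sup>+ w. (\<phi> w * ennreal (Dl l k w)) * ennreal (\<gamma> + Sg l k w) \<partial>M)"
    unfolding W_def using g0 Sg_nn Dl_nn by (intro nn_integral_cong) (simp add: ennreal_mult mult_ac)
  also have "\<dots> = ED \<phi> l k * (\<integral>\<^sup>+ w. ennreal (\<gamma> + Sg l k w) \<partial>M)"
  proof -
    have "(\<lambda>w. ennreal (\<gamma> + Sg l k w)) \<in> borel_measurable (Msub {SrcEta k})"
      using Sg_sub[OF l, of k] by measurable
    then show ?thesis by (rule fac[OF \<phi> l]) (auto simp: Inow_def)
  qed
  also have "\<dots> \<le> ED \<phi> l k * ennreal (2 * \<gamma>)"
  proof (rule mult_left_mono)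
    have "(\<integral>\<^sup>+ w. ennreal (\<gamma> + Sg l k w) \<partial>M) = ennreal \<gamma> + (\<integral>\<^sup>+ w. ennreal (Sg l k w) \<partial>M)"
      using g0 Sg_nn Msub_meas_M[OF Sg_sub[OF l]] by (simp add: nn_integral_add emeasure_space_1 ennreal_plus)
    also have "\<dots> \<le> ennreal \<gamma> + ennreal (N * z)" using Sg_int[OF zpos zeta_z l] by (rule add_left_mono)
    also have "\<dots> = ennreal (\<gamma> + N * z)" using g0 zpos by (intro ennreal_plus[symmetric]) auto
    also have "\<dots> \<le> ennreal (2 * \<gamma>)" using zC by (intro ennreal_leI) simp
    finally show "(\<integral>\<^sup>+ w. ennreal (\<gamma> + Sg l k w) \<partial>M) \<le> ennreal (2 * \<gamma>)" .
  qed simp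
  finally show ?thesis by (simp add: mult.commute)
qed

lemma incr_bound:
  assumes w: "w \<in> space M" and l: "l \<in> {1..d}" and i: "i \<in> {1..N}"
  shows "\<bar>Xt w (Suc k) (i,l) - Xt w k (i,l)\<bar> \<le> W l k w"
proof -
  interpret b: blk "{1..N}" \<gamma> "aa w k l" "cc w k l" "rr w k l" "ee w k l" using blk_inst[OF w l] .
  have hl: "Min (aa w k l 0 ` {1..N}) \<le> cc w k l 0 i \<and> cc w k l 0 i \<le> Max (aa w k l 0 ` {1..N})"
    using b.hull[OF i] .
  have ai: "Min (aa w k l 0 ` {1..N}) \<le> aa w k l 0 i" "aa w k l 0 i \<le> Max (aa w k l 0 ` {1..N})"
    using i by (auto intro!: Min_le Max_ge)
  have dd: "Dl l k w = Max (aa w k l 0 ` {1..N}) - Min (aa w k l 0 ` {1..N})" using Dl_aa[of l k 0 w] by simp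
  have ac: "\<bar>aa w k l 0 i - cc w k l 0 i\<bar> \<le> Dl l k w" using dd hl ai by linarith
  have eta: "\<bar>\<eta> k w (i,l)\<bar> \<le> Sg l k w" unfolding Sg_def using i by (intro member_le_sum) auto
  have "Xt w (Suc k) (i,l) - Xt w k (i,l) = - (aa w k l 0 i - cc w k l 0 i) * (\<gamma> + \<eta> k w (i,l))"
    using step_formula[OF i l] by (simp add: Xt_Suc aa_def cc_def algebra_simps)
  then have "\<bar>Xt w (Suc k) (i,l) - Xt w k (i,l)\<bar> = \<bar>aa w k l 0 i - cc w k l 0 i\<bar> * \<bar>\<gamma> + \<eta> k w (i,l)\<bar>"
    by (simp add: abs_mult abs_minus_commute)
  also have "\<dots> \<le> Dl l k w * (\<gamma> + Sg l k w)"
  proof (rule mult_mono)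
    show "\<bar>\<gamma> + \<eta> k w (i,l)\<bar> \<le> \<gamma> + Sg l k w" using eta g0 by linarith
  qed (use ac Dl_nn in auto)
  finally show ?thesis unfolding W_def by (simp add: mult.commute)
qed

lemma spread_bound:
  assumes i: "i \<in> {1..N}" and j: "j \<in> {1..N}"
  shows "\<bar>Xt w n (i,l) - Xt w n (j,l)\<bar> \<le> Dl l n w"
proof -
  have "Min (aa w n l 0 ` {1..N}) \<le> aa w n l 0 i" "aa w n l 0 i \<le> Max (aa w n l 0 ` {1..N})"
       "Min (aa w n l 0 ` {1..N}) \<le> aa w n l 0 j" "aa w n l 0 j \<le> Max (aa w n l 0 ` {1..N})"
    using i j by (auto intro!: Min_le Max_ge)
  then show ?thesis using Dl_aa[of l n 0 w] by (simp add: aa_def)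
qed

end

context rbs2 begin

definition "T l n w = (\<Sum>k. ennreal (W l (k+n) w))"
definition "Dx l k w = Xt w (Suc k) (1,l) - Xt w k (1,l)"
definition "xinf w l = (if T l 0 w < \<top> then X0 w (1,l) + (\<Sum>k. Dx l k w) else 0)"

lemma one_in: "(1::nat) \<in> {1..N}" using N2 by simp

lemma pt_bound:
  assumes w: "w \<in> space M" and l: "l \<in> {1..d}" and i: "i \<in> {1..N}"
  shows "ennreal \<bar>Xt w n (i,l) - xinf w l\<bar> \<le> ennreal (Dl l n w) + T l n w"
proof (cases "T l 0 w < \<top>")
  case False
  have "T l n w = \<top>"
  proof (rule ccontr)
    assume "T l n w \<noteq> \<top>"
    then have "summable (\<lambda>k. W l (k+n) w)" unfolding T_def by (intro summable_suminf_not_top W_nn)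
    then have "summable (\<lambda>k. W l k w)" by (rule summable_iff_shift[THEN iffD1])
    then have "T l 0 w \<noteq> \<top>" unfolding T_def by (simp add: ennreal_suminf_neq_top W_nn)
    then show False using False by (simp add: top.not_eq_extremum)
  qed
  then show ?thesis by simp
next
  case True
  have sW: "summable (\<lambda>k. W l k w)" using True unfolding T_def by (intro summable_suminf_not_top W_nn) auto
  have dxb: "\<And>k. \<bar>Dx l k w\<bar> \<le> W l k w" unfolding Dx_def using incr_bound[OF w l one_in] by blast
  have sA: "summable (\<lambda>k. \<bar>Dx l k w\<bar>)" using sW dxb by (intro summable_comparison_test'[OF sW]) auto
  have sD: "summable (\<lambda>k. Dx l k w)" using sA by (rule summable_rabs_cancel)
  have sWn: "summable (\<lambda>k. W l (k+n) w)" using sW by (rule summable_iff_shift[THEN iffD2])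
  have tel: "Xt w n (1,l) = X0 w (1,l) + (\<Sum>k<n. Dx l k w)"
    unfolding Dx_def using sum_lessThan_telescope[of "\<lambda>k. Xt w k (1,l)" n] by (simp add: Xt_0)
  have xi: "xinf w l = X0 w (1,l) + ((\<Sum>k. Dx l (k+n) w) + (\<Sum>k<n. Dx l k w))"
    using True suminf_split_initial_segment[OF sD, of n] by (simp add: xinf_def)
  then have diff: "xinf w l - Xt w n (1,l) = (\<Sum>k. Dx l (k+n) w)" using tel by simp
  have sAn: "summable (\<lambda>k. \<bar>Dx l (k+n) w\<bar>)" using sA by (rule summable_iff_shift[THEN iffD2])
  have "\<bar>\<Sum>k. Dx l (k+n) w\<bar> \<le> (\<Sum>k. \<bar>Dx l (k+n) w\<bar>)"
    using sAn by (rule summable_rabs)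
  also have "\<dots> \<le> (\<Sum>k. W l (k+n) w)"
    using sAn sWn dxb by (intro suminf_le) auto
  finally have t1: "\<bar>xinf w l - Xt w n (1,l)\<bar> \<le> (\<Sum>k. W l (k+n) w)" using diff by simp
  have t2: "\<bar>Xt w n (i,l) - Xt w n (1,l)\<bar> \<le> Dl l n w" using spread_bound[OF i one_in] .
  have "\<bar>Xt w n (i,l) - xinf w l\<bar> \<le> Dl l n w + (\<Sum>k. W l (k+n) w)" using t1 t2 by linarith
  then have "ennreal \<bar>Xt w n (i,l) - xinf w l\<bar> \<le> ennreal (Dl l n w + (\<Sum>k. W l (k+n) w))"
    by (rule ennreal_leI)
  also have "\<dots> = ennreal (Dl l n w) + ennreal (\<Sum>k. W l (k+n) w)"
    using Dl_nn W_nn by (intro ennreal_plus suminf_nonneg sWn) auto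
  also have "ennreal (\<Sum>k. W l (k+n) w) = T l n w"
    unfolding T_def using sWn W_nn by (intro suminf_ennreal2[symmetric]) auto
  finally show ?thesis .
qed

definition "qq = exp (- \<Lambda>)"
definition "Kd = Cb * (1 + 2 * \<gamma>) / (1 - qq)"

lemma qq_bounds: "0 < qq" "qq < 1" unfolding qq_def using Lam_pos by auto

lemma exp_split: "exp (- \<Lambda> * real (k+n)) = exp (- \<Lambda> * n) * qq^k"
proof -
  have "exp (- \<Lambda> * real (k+n)) = exp (- \<Lambda> * n) * exp (real k * (- \<Lambda>))"
    by (simp add: algebra_simps exp_add[symmetric])
  then show ?thesis unfolding qq_def by (simp only: exp_of_nat_mult)
qed

lemma T_meas: "l \<in> {1..d} \<Longrightarrow> T l n \<in> borel_measurable M"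
  unfolding T_def[abs_def] using W_meas by measurable

lemma int_DT:
  assumes \<phi>: "\<phi> \<in> borel_measurable (Msub {SrcX0})" and l: "l \<in> {1..d}"
  shows "(\<integral>\<^sup>+ w. \<phi> w * (ennreal (Dl l n w) + T l n w) \<partial>M) \<le> ennreal (Kd * exp (- \<Lambda> * n)) * ED \<phi> l 0"
proof -
  have \<phi>M: "\<phi> \<in> borel_measurable M" using Msub_meas_M[OF \<phi>] .
  have DM: "(\<lambda>w. ennreal (Dl l n w)) \<in> borel_measurable M" using Msub_meas_M[OF Dl_sub[OF l]] by simp
  have WM: "\<And>k. (\<lambda>w. \<phi> w * ennreal (W l (k+n) w)) \<in> borel_measurable M" using \<phi>M W_meas[OF l] by measurable
  let ?E = "exp (- \<Lambda> * n)"
  have "(\<integral>\<^sup>+ w. \<phi> w * (ennreal (Dl l n w) + T l n w) \<partial>M)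
      = (\<integral>\<^sup>+ w. \<phi> w * ennreal (Dl l n w) + (\<Sum>k. \<phi> w * ennreal (W l (k+n) w)) \<partial>M)"
    unfolding T_def by (simp add: distrib_left)
  also have "\<dots> = ED \<phi> l n + (\<integral>\<^sup>+ w. (\<Sum>k. \<phi> w * ennreal (W l (k+n) w)) \<partial>M)"
    by (rule nn_integral_add) (use \<phi>M DM WM in measurable)
  also have "\<dots> = ED \<phi> l n + (\<Sum>k. \<integral>\<^sup>+ w. \<phi> w * ennreal (W l (k+n) w) \<partial>M)"
  proof -
    have "(\<integral>\<^sup>+ w. (\<Sum>k. \<phi> w * ennreal (W l (k+n) w)) \<partial>M) = (\<Sum>k. \<integral>\<^sup>+ w. \<phi> w * ennreal (W l (k+n) w) \<partial>M)"
      by (rule nn_integral_suminf) (use WM in auto)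
    then show ?thesis by simp
  qed
  also have "\<dots> \<le> ennreal (Cb * ?E) * ED \<phi> l 0 + (\<Sum>k. ennreal (2 * \<gamma> * Cb * ?E * qq^k) * ED \<phi> l 0)"
  proof (rule add_mono)
    show "ED \<phi> l n \<le> ennreal (Cb * ?E) * ED \<phi> l 0" by (rule ED_decay[OF \<phi> l])
    show "(\<Sum>k. \<integral>\<^sup>+ w. \<phi> w * ennreal (W l (k+n) w) \<partial>M) \<le> (\<Sum>k. ennreal (2 * \<gamma> * Cb * ?E * qq^k) * ED \<phi> l 0)"
    proof (rule suminf_le)
      fix k
      have "(\<integral>\<^sup>+ w. \<phi> w * ennreal (W l (k+n) w) \<partial>M) \<le> ennreal (2 * \<gamma>) * ED \<phi> l (k+n)" by (rule EW[OF \<phi> l])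
      also have "\<dots> \<le> ennreal (2 * \<gamma>) * (ennreal (Cb * exp (- \<Lambda> * real (k+n))) * ED \<phi> l 0)"
        using ED_decay[OF \<phi> l, of "k+n"] by (intro mult_left_mono) auto
      also have "\<dots> = ennreal (2 * \<gamma> * Cb * ?E * qq^k) * ED \<phi> l 0"
        using g0 Cb_pos qq_bounds unfolding exp_split
        by (simp add: ennreal_mult' mult.assoc)
      finally show "(\<integral>\<^sup>+ w. \<phi> w * ennreal (W l (k+n) w) \<partial>M) \<le> ennreal (2 * \<gamma> * Cb * ?E * qq^k) * ED \<phi> l 0" .
    qed auto
  qed
  also have "(\<Sum>k. ennreal (2 * \<gamma> * Cb * ?E * qq^k) * ED \<phi> l 0) = ennreal (2 * \<gamma> * Cb * ?E / (1 - qq)) * ED \<phi> l 0"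
  proof -
    have s: "(\<lambda>k. 2 * \<gamma> * Cb * ?E * qq^k) sums (2 * \<gamma> * Cb * ?E * (1 / (1 - qq)))"
      using qq_bounds by (intro sums_mult geometric_sums) auto
    have "(\<Sum>k. ennreal (2 * \<gamma> * Cb * ?E * qq^k)) = ennreal (\<Sum>k. 2 * \<gamma> * Cb * ?E * qq^k)"
      using s g0 Cb_pos qq_bounds by (intro suminf_ennreal2) (auto simp: sums_iff)
    also have "(\<Sum>k. 2 * \<gamma> * Cb * ?E * qq^k) = 2 * \<gamma> * Cb * ?E / (1 - qq)" using s by (simp add: sums_iff)
    finally show ?thesis by (simp add: ennreal_suminf_multc)
  qed
  also have "ennreal (Cb * ?E) * ED \<phi> l 0 + ennreal (2 * \<gamma> * Cb * ?E / (1 - qq)) * ED \<phi> l 0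
     = ennreal (Cb * ?E + 2 * \<gamma> * Cb * ?E / (1 - qq)) * ED \<phi> l 0"
    using g0 Cb_pos qq_bounds by (simp add: distrib_right[symmetric] ennreal_plus[symmetric] del: ennreal_plus)
  also have "\<dots> \<le> ennreal (Kd * ?E) * ED \<phi> l 0"
  proof (intro mult_right_mono ennreal_leI)
    have q: "0 < 1 - qq" "1 - qq \<le> 1" using qq_bounds by auto
    have "Cb * ?E = Cb * ?E * 1" by simp
    also have "\<dots> \<le> Cb * ?E * (1 / (1 - qq))" using q Cb_pos by (intro mult_left_mono) (auto simp: field_simps)
    finally have "Cb * ?E + 2 * \<gamma> * Cb * ?E / (1 - qq) \<le> Cb * ?E / (1 - qq) + 2 * \<gamma> * Cb * ?E / (1 - qq)"
      by simp
    also have "\<dots> = (Cb * ?E + 2 * \<gamma> * Cb * ?E) / (1 - qq)" by (rule add_divide_distrib[symmetric])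
    also have "\<dots> = (Cb * (1 + 2 * \<gamma>) * ?E) / (1 - qq)" by (simp add: algebra_simps)
    also have "\<dots> = Kd * ?E" unfolding Kd_def by simp
    finally show "Cb * ?E + 2 * \<gamma> * Cb * ?E / (1 - qq) \<le> Kd * ?E" .
  qed simp
  finally show ?thesis .
qed

end

context rbs2 begin

definition "C1 = Cb * (1 + 2 * \<gamma>) / \<gamma>"

lemma C1_ge: "Cb \<le> C1"
proof -
  have "Cb * 1 \<le> Cb * ((1 + 2 * \<gamma>) / \<gamma>)" using Cb_pos g0 g1 by (intro mult_left_mono) (auto simp: field_simps)
  then show ?thesis unfolding C1_def by simp
qed

lemma C1_pos: "0 < C1" using C1_ge Cb_pos by linarith

lemma one_meas: "(\<lambda>_. 1::ennreal) \<in> borel_measurable (Msub {SrcX0})" by simp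

lemma claim1a:
  assumes l: "l \<in> {1..d}"
  shows "(\<integral>\<^sup>+ w. ennreal (diam_coord N (cbo_path N d \<gamma> \<omega> X0 B \<eta> w n) l) \<partial>M)
     \<le> ennreal (C1 * exp (- \<Lambda> * real n)) * (\<integral>\<^sup>+ w. ennreal (diam_coord N (cbo_path N d \<gamma> \<omega> X0 B \<eta> w 0) l) \<partial>M)"
proof -
  have "ED (\<lambda>_. 1) l n \<le> ennreal (Cb * exp (- \<Lambda> * n)) * ED (\<lambda>_. 1) l 0" by (rule ED_decay[OF one_meas l])
  also have "\<dots> \<le> ennreal (C1 * exp (- \<Lambda> * n)) * ED (\<lambda>_. 1) l 0"
    using C1_ge by (intro mult_right_mono ennreal_leI mult_right_mono) auto
  finally show ?thesis by (simp add: Dl_def Xt_def)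
qed

lemma xinf_meas: "l \<in> {1..d} \<Longrightarrow> (\<lambda>w. xinf w l) \<in> borel_measurable M"
proof -
  assume l: "l \<in> {1..d}"
  have T: "T l 0 \<in> borel_measurable M" using T_meas[OF l] .
  have X: "(\<lambda>w. X0 w (1,l)) \<in> borel_measurable M" using comp_meas[OF X0_meas] one_in l by simp
  have Dm: "\<And>k. (\<lambda>w. Dx l k w) \<in> borel_measurable M"
    unfolding Dx_def using comp_meas[OF Xt_meas] one_in l by (intro borel_measurable_diff) auto
  show ?thesis unfolding xinf_def using T X Dm by measurable
qed

lemma dist_pt:
  assumes w: "w \<in> space M" and i: "i \<in> {1..N}"
  shows "ennreal (dist1 d (Xt w n) i (xinf w)) \<le> (\<Sum>l\<in>{1..d}. ennreal (Dl l n w) + T l n w)"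
proof -
  have "ennreal (dist1 d (Xt w n) i (xinf w)) = (\<Sum>l\<in>{1..d}. ennreal \<bar>Xt w n (i,l) - xinf w l\<bar>)"
    unfolding dist1_def by (simp add: sum_ennreal)
  also have "\<dots> \<le> (\<Sum>l\<in>{1..d}. ennreal (Dl l n w) + T l n w)"
    using pt_bound[OF w _ i] by (intro sum_mono) auto
  finally show ?thesis .
qed

lemma claim1b:
  assumes i: "i \<in> {1..N}" and d1: "d \<ge> 1"
  shows "(\<integral>\<^sup>+ w. ennreal (dist1 d (cbo_path N d \<gamma> \<omega> X0 B \<eta> w n) i (xinf w)) \<partial>M)
     \<le> ennreal (real d * (\<gamma> + sqrt (real N) * \<zeta>) * C1 / (1 - exp (- \<Lambda>)) * exp (- \<Lambda> * real n))
        * (MAX l\<in>{1..d}. \<integral>\<^sup>+ w. ennreal (diam_coord N (cbo_path N d \<gamma> \<omega> X0 B \<eta> w 0) l) \<partial>M)"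
proof -
  let ?E = "exp (- \<Lambda> * real n)"
  let ?MX = "(MAX l\<in>{1..d}. ED (\<lambda>_. 1) l 0)"
  have "(\<integral>\<^sup>+ w. ennreal (dist1 d (Xt w n) i (xinf w)) \<partial>M) \<le> (\<integral>\<^sup>+ w. (\<Sum>l\<in>{1..d}. ennreal (Dl l n w) + T l n w) \<partial>M)"
    using dist_pt[OF _ i] by (rule nn_integral_mono)
  also have "\<dots> = (\<Sum>l\<in>{1..d}. \<integral>\<^sup>+ w. 1 * (ennreal (Dl l n w) + T l n w) \<partial>M)"
    using Msub_meas_M[OF Dl_sub] T_meas by (subst nn_integral_sum) auto
  also have "\<dots> \<le> (\<Sum>l\<in>{1..d}. ennreal (Kd * ?E) * ED (\<lambda>_. 1) l 0)"
    using int_DT[OF one_meas] by (intro sum_mono) auto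
  also have "\<dots> \<le> (\<Sum>l\<in>{1..d}. ennreal (Kd * ?E) * ?MX)"
    using d1 by (intro sum_mono mult_left_mono Max_ge) auto
  also have "\<dots> = ennreal (real d * (Kd * ?E)) * ?MX"
    using Lam_pos by (simp add: ennreal_mult' ennreal_of_nat_eq_real_of_nat mult.assoc)
  also have "\<dots> \<le> ennreal (real d * (\<gamma> + sqrt (real N) * \<zeta>) * C1 / (1 - exp (- \<Lambda>)) * ?E) * ?MX"
  proof (intro mult_right_mono ennreal_leI)
    have q: "0 < 1 - qq" using qq_bounds by simp
    have "Kd = \<gamma> * C1 / (1 - qq)" unfolding Kd_def C1_def using g0 by simp
    also have "\<dots> \<le> (\<gamma> + sqrt (real N) * \<zeta>) * C1 / (1 - qq)"
      using q C1_pos z0 by (intro divide_right_mono mult_right_mono) auto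
    finally have "Kd \<le> (\<gamma> + sqrt (real N) * \<zeta>) * C1 / (1 - qq)" .
    then have "real d * (Kd * ?E) \<le> real d * ((\<gamma> + sqrt (real N) * \<zeta>) * C1 / (1 - qq) * ?E)"
      by (intro mult_left_mono mult_right_mono) auto
    then show "real d * (Kd * ?E) \<le> real d * (\<gamma> + sqrt (real N) * \<zeta>) * C1 / (1 - exp (- \<Lambda>)) * ?E"
      by (simp add: qq_def mult.assoc)
  qed simp
  finally show ?thesis by (simp add: Dl_def Xt_def)
qed

end

context rbs2 begin

definition "\<phi>0 w = ennreal (1 / (1 + (\<Sum>l\<in>{1..d}. Dl l 0 w)))"
definition "\<Lambda>2 = \<Lambda> / 2"
definition "SS n w = (\<Sum>l\<in>{1..d}. ennreal (Dl l n w) + T l n w)"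
definition "FF w = (\<Sum>n. ennreal (exp (\<Lambda>2 * n)) * SS n w)"
definition "C3 w = enn2real (FF w) + 1"

lemma Lam2_pos: "0 < \<Lambda>2" unfolding \<Lambda>2_def using Lam_pos by simp

lemma sumD_nn: "0 \<le> (\<Sum>l\<in>{1..d}. Dl l 0 w)" by (intro sum_nonneg Dl_nn)

lemma phi0_meas: "\<phi>0 \<in> borel_measurable (Msub {SrcX0})"
proof -
  have "\<And>l. l \<in> {1..d} \<Longrightarrow> Dl l 0 \<in> borel_measurable (Msub {SrcX0})"
    using Dl_sub[of _ 0] by (simp add: Inow_def)
  then show ?thesis unfolding \<phi>0_def[abs_def] by measurable
qed

lemma phi0_pos: "0 < \<phi>0 w" "\<phi>0 w < \<top>"
  unfolding \<phi>0_def using sumD_nn[of w] by (auto simp: ennreal_less_top)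

lemma ED_phi0: assumes l: "l \<in> {1..d}" shows "ED \<phi>0 l 0 \<le> 1"
proof -
  have "ED \<phi>0 l 0 \<le> (\<integral>\<^sup>+ w. 1 \<partial>M)"
  proof (rule nn_integral_mono)
    fix w
    have s: "0 \<le> (\<Sum>l\<in>{1..d}. Dl l 0 w)" by (rule sumD_nn)
    have "Dl l 0 w \<le> (\<Sum>l\<in>{1..d}. Dl l 0 w)" using l Dl_nn by (intro member_le_sum) auto
    then have le: "Dl l 0 w / (1 + (\<Sum>l\<in>{1..d}. Dl l 0 w)) \<le> 1" using s by (simp add: field_simps)
    have "\<phi>0 w * ennreal (Dl l 0 w) = ennreal (Dl l 0 w / (1 + (\<Sum>l\<in>{1..d}. Dl l 0 w)))"
      unfolding \<phi>0_def using s Dl_nn by (simp add: ennreal_mult[symmetric] del: ennreal_mult)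
    also have "\<dots> \<le> 1" using le by simp
    finally show "\<phi>0 w * ennreal (Dl l 0 w) \<le> 1" .
  qed
  then show ?thesis by (simp add: emeasure_space_1)
qed

lemma SS_meas: "SS n \<in> borel_measurable M"
  unfolding SS_def[abs_def] using Msub_meas_M[OF Dl_sub] T_meas by measurable

lemma FF_meas: "FF \<in> borel_measurable M"
  unfolding FF_def[abs_def] using SS_meas by measurable

lemma int_phi0_FF: "(\<integral>\<^sup>+ w. \<phi>0 w * FF w \<partial>M) < \<top>"
proof -
  let ?q = "exp (- \<Lambda>2)"
  have q: "0 < ?q" "?q < 1" using Lam2_pos by auto
  have pm: "\<phi>0 \<in> borel_measurable M" using Msub_meas_M[OF phi0_meas] .
  have "(\<integral>\<^sup>+ w. \<phi>0 w * FF w \<partial>M) = (\<integral>\<^sup>+ w. (\<Sum>n. ennreal (exp (\<Lambda>2 * n)) * (\<phi>0 w * SS n w)) \<partial>M)"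
    unfolding FF_def by (simp add: ennreal_suminf_cmult[symmetric] mult.left_commute del: ennreal_suminf_cmult)
  also have "\<dots> = (\<Sum>n. \<integral>\<^sup>+ w. ennreal (exp (\<Lambda>2 * n)) * (\<phi>0 w * SS n w) \<partial>M)"
    by (rule nn_integral_suminf) (use pm SS_meas in measurable)
  also have "\<dots> \<le> (\<Sum>n. ennreal (real d * Kd * ?q ^ n))"
  proof (rule suminf_le)
    fix n
    have "(\<integral>\<^sup>+ w. ennreal (exp (\<Lambda>2 * n)) * (\<phi>0 w * SS n w) \<partial>M)
        = ennreal (exp (\<Lambda>2 * n)) * (\<Sum>l\<in>{1..d}. \<integral>\<^sup>+ w. \<phi>0 w * (ennreal (Dl l n w) + T l n w) \<partial>M)"
    proof -
      have "(\<integral>\<^sup>+ w. ennreal (exp (\<Lambda>2 * n)) * (\<phi>0 w * SS n w) \<partial>M) = ennreal (exp (\<Lambda>2 * n)) * (\<integral>\<^sup>+ w. \<phi>0 w * SS n w \<partial>M)"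
        by (rule nn_integral_cmult) (use pm SS_meas in measurable)
      also have "(\<integral>\<^sup>+ w. \<phi>0 w * SS n w \<partial>M) = (\<integral>\<^sup>+ w. (\<Sum>l\<in>{1..d}. \<phi>0 w * (ennreal (Dl l n w) + T l n w)) \<partial>M)"
        unfolding SS_def by (simp add: sum_distrib_left)
      also have "\<dots> = (\<Sum>l\<in>{1..d}. \<integral>\<^sup>+ w. \<phi>0 w * (ennreal (Dl l n w) + T l n w) \<partial>M)"
        by (rule nn_integral_sum) (use pm Msub_meas_M[OF Dl_sub] T_meas in measurable)
      finally show ?thesis .
    qed
    also have "\<dots> \<le> ennreal (exp (\<Lambda>2 * n)) * (\<Sum>l\<in>{1..d}. ennreal (Kd * exp (- \<Lambda> * n)) * 1)"
    proof (intro mult_left_mono sum_mono)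
      fix l assume l: "l \<in> {1..d}"
      have "(\<integral>\<^sup>+ w. \<phi>0 w * (ennreal (Dl l n w) + T l n w) \<partial>M) \<le> ennreal (Kd * exp (- \<Lambda> * n)) * ED \<phi>0 l 0"
        by (rule int_DT[OF phi0_meas l])
      also have "\<dots> \<le> ennreal (Kd * exp (- \<Lambda> * n)) * 1" using ED_phi0[OF l] by (intro mult_left_mono) auto
      finally show "(\<integral>\<^sup>+ w. \<phi>0 w * (ennreal (Dl l n w) + T l n w) \<partial>M) \<le> ennreal (Kd * exp (- \<Lambda> * n)) * 1" .
    qed simp
    also have "\<dots> = ennreal (real d * Kd * ?q ^ n)"
    proof -
      have Kd0: "0 \<le> Kd" unfolding Kd_def using Cb_pos g0 qq_bounds by simp
      have "exp (\<Lambda>2 * n) * (real d * (Kd * exp (- \<Lambda> * n))) = real d * Kd * (exp (\<Lambda>2 * n) * exp (- \<Lambda> * n))"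
        by (simp add: mult_ac)
      also have "exp (\<Lambda>2 * n) * exp (- \<Lambda> * n) = ?q ^ n"
        unfolding \<Lambda>2_def by (simp add: exp_add[symmetric] exp_of_nat_mult[symmetric] algebra_simps)
      finally have e: "exp (\<Lambda>2 * n) * (real d * (Kd * exp (- \<Lambda> * n))) = real d * Kd * ?q ^ n" .
      have h: "ennreal (exp (\<Lambda>2 * n)) * (\<Sum>l\<in>{1..d}. ennreal (Kd * exp (- \<Lambda> * n)) * 1)
          = ennreal (exp (\<Lambda>2 * n) * (real d * (Kd * exp (- \<Lambda> * n))))"
        using Kd0 by (simp add: ennreal_mult' ennreal_of_nat_eq_real_of_nat)
      show ?thesis using h unfolding e .
    qed
    finally show "(\<integral>\<^sup>+ w. ennreal (exp (\<Lambda>2 * n)) * (\<phi>0 w * SS n w) \<partial>M) \<le> ennreal (real d * Kd * ?q ^ n)" .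
  qed auto
  also have "\<dots> < \<top>"
  proof -
    have Kd0: "0 \<le> Kd" unfolding Kd_def using Cb_pos g0 qq_bounds by simp
    have "summable (\<lambda>n. real d * Kd * ?q ^ n)" using q by (intro summable_mult summable_geometric) auto
    then show ?thesis using Kd0 q by (simp add: ennreal_suminf_neq_top top.not_eq_extremum)
  qed
  finally show ?thesis .
qed

lemma AE_FF: "AE w in M. FF w \<noteq> \<top>"
proof -
  have "AE w in M. \<phi>0 w * FF w \<noteq> \<infinity>"
  proof (rule nn_integral_PInf_AE)
    show "(\<lambda>w. \<phi>0 w * FF w) \<in> borel_measurable M" using Msub_meas_M[OF phi0_meas] FF_meas by measurable
    show "(\<integral>\<^sup>+ w. \<phi>0 w * FF w \<partial>M) \<noteq> \<infinity>" using int_phi0_FF by simp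
  qed
  then show ?thesis
  proof (rule AE_mp, intro AE_I2 impI)
    fix w assume "\<phi>0 w * FF w \<noteq> \<infinity>"
    then show "FF w \<noteq> \<top>" using phi0_pos[of w] by (auto simp: ennreal_mult_eq_top_iff)
  qed
qed

lemma C3_meas: "C3 \<in> borel_measurable M" unfolding C3_def[abs_def] using FF_meas by measurable
lemma C3_pos: "0 < C3 w" unfolding C3_def by (simp add: add_nonneg_pos)

lemma claim2_pt:
  assumes w: "w \<in> space M" and F: "FF w \<noteq> \<top>" and i: "i \<in> {1..N}"
  shows "dist1 d (Xt w n) i (xinf w) \<le> C3 w * exp (- \<Lambda>2 * real n)"
proof -
  have "ennreal (exp (\<Lambda>2 * n)) * SS n w \<le> FF w"
    unfolding FF_def using sum_le_suminf[of "\<lambda>n. ennreal (exp (\<Lambda>2 * n)) * SS n w" "{n}"] by auto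
  then have "ennreal (exp (- \<Lambda>2 * n)) * (ennreal (exp (\<Lambda>2 * n)) * SS n w) \<le> ennreal (exp (- \<Lambda>2 * n)) * FF w"
    by (rule mult_left_mono) simp
  moreover have "ennreal (exp (- \<Lambda>2 * n)) * ennreal (exp (\<Lambda>2 * n)) = 1"
    by (simp add: ennreal_mult[symmetric] exp_add[symmetric] del: ennreal_mult)
  ultimately have "SS n w \<le> ennreal (exp (- \<Lambda>2 * n)) * FF w" by (simp add: mult.assoc[symmetric])
  also have "FF w = ennreal (enn2real (FF w))" using F by (simp add: top.not_eq_extremum)
  finally have "ennreal (dist1 d (Xt w n) i (xinf w)) \<le> ennreal (exp (- \<Lambda>2 * n) * enn2real (FF w))"
    using dist_pt[OF w i, of n] unfolding SS_def by (simp add: ennreal_mult)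
  then have "dist1 d (Xt w n) i (xinf w) \<le> exp (- \<Lambda>2 * n) * enn2real (FF w)"
    by (subst (asm) ennreal_le_iff) auto
  also have "\<dots> \<le> exp (- \<Lambda>2 * n) * C3 w" unfolding C3_def by (intro mult_left_mono) auto
  finally show ?thesis by (simp add: mult.commute)
qed

end

theorem theorem5p1:
  fixes N P m0 :: nat and \<gamma> :: real
  assumes "N \<ge> 2" and "P \<ge> 2" and "0 < \<gamma>" and "\<gamma> < 1"
    and "m0 > 0" and "covering_property N P m0"
  shows "\<exists>\<zeta>3 > 0. \<forall>(d::nat) (\<zeta>::real) (M::'a measure) \<omega> X0 B \<eta>.
     d \<ge> 1 \<and> 0 \<le> \<zeta> \<and> \<zeta> < \<zeta>3 \<and> rbcbo_setting N d P \<zeta> M \<omega> X0 B \<eta> \<longrightarrow>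
     (let X = cbo_path N d \<gamma> \<omega> X0 B \<eta> in
      \<exists>xinf :: 'a \<Rightarrow> nat \<Rightarrow> real.
        (\<forall>l\<in>{1..d}. (\<lambda>w. xinf w l) \<in> borel_measurable M)
      \<comment> \<open>(1)\<close>
      \<and> (\<exists>C1 > 0. \<exists>\<Lambda>1 > 0.
          (\<forall>n. \<forall>l\<in>{1..d}.
             (\<integral>\<^sup>+ w. ennreal (diam_coord N (X w n) l) \<partial>M)
               \<le> ennreal (C1 * exp (- \<Lambda>1 * real n)) * (\<integral>\<^sup>+ w. ennreal (diam_coord N (X w 0) l) \<partial>M))
        \<and> (\<forall>n. \<forall>i\<in>{1..N}.
             (\<integral>\<^sup>+ w. ennreal (dist1 d (X w n) i (xinf w)) \<partial>M)
               \<le> ennreal (real d * (\<gamma> + sqrt (real N) * \<zeta>) * C1 / (1 - exp (- \<Lambda>1))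
                          * exp (- \<Lambda>1 * real n))
                 * (MAX l\<in>{1..d}. \<integral>\<^sup>+ w. ennreal (diam_coord N (X w 0) l) \<partial>M)))
      \<comment> \<open>(2)\<close>
      \<and> (\<exists>\<Lambda>2 > 0. \<exists>C3 :: 'a \<Rightarrow> real.
          C3 \<in> borel_measurable M \<and> (\<forall>w\<in>space M. C3 w > 0)
        \<and> (AE w in M. \<forall>n. \<forall>i\<in>{1..N}.
             dist1 d (X w n) i (xinf w) \<le> C3 w * exp (- \<Lambda>2 * real n))))"
proof -
  note N2 = assms(1) and g0 = assms(3) and g1 = assms(4) and m0 = assms(5)
  obtain Pt where Pt: "\<forall>k\<in>{1..m0}. Pt k \<in> admissible N P"
    and cover: "\<forall>i\<in>{1..N}. \<forall>j\<in>{1..N}. \<exists>k\<in>{1..m0}. \<exists>S\<in>Pt k. i \<in> S \<and> j \<in> S"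
    using assms(6) unfolding covering_property_def by blast
  have "Pt 1 \<in> admissible N P" using Pt m0 by auto
  then have cardA: "card (admissible N P) > 0" using admissible_finite by (auto simp: card_gt_0_iff)
  define dp where "dp = \<gamma> * (1-\<gamma>)^m0 * (1 / real (card (admissible N P)))^m0"
  have dp: "0 < dp" unfolding dp_def using g0 g1 cardA by simp
  define z where "z = min (1 / (2 * N)) (min (\<gamma> / N) (dp / (4 * m0^2 * 2^m0 * N)))"
  have Npos: "(0::real) < N" using N2 by simp
  have zpos: "0 < z" unfolding z_def using Npos g0 dp m0 by simp
  have zA: "N * z \<le> 1/2"
  proof -
    have "z \<le> 1 / (2 * N)" unfolding z_def by simp
    then have "N * z \<le> N * (1 / (2 * N))" using Npos by (intro mult_left_mono) auto
    then show ?thesis using Npos by simp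
  qed
  have zC: "N * z \<le> \<gamma>"
  proof -
    have "z \<le> \<gamma> / N" unfolding z_def by simp
    then have "N * z \<le> N * (\<gamma> / N)" using Npos by (intro mult_left_mono) auto
    then show ?thesis using Npos by simp
  qed
  have zB: "2 * m0^2 * 2^m0 * N * z \<le> (\<gamma> * (1-\<gamma>)^m0 * (1 / real (card (admissible N P)))^m0) / 2"
  proof -
    define c where "c = (4 * m0^2 * 2^m0 * N :: real)"
    have c: "0 < c" unfolding c_def using m0 Npos by simp
    have "z \<le> dp / c" unfolding z_def c_def by simp
    then have "c * z \<le> c * (dp / c)" using c by (intro mult_left_mono) auto
    also have "c * (dp / c) = dp" using c by simp
    finally have "c * z \<le> dp" .
    then have "(4 * m0^2 * 2^m0 * N) * z \<le> dp" unfolding c_def .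
    then show ?thesis unfolding dp_def by (simp add: field_simps)
  qed
  show ?thesis
  proof (rule exI[of _ z], intro conjI allI impI)
    show "0 < z" by (rule zpos)
    fix d :: nat and \<zeta> :: real and M :: "'a measure" and \<omega> X0 B \<eta>
    assume H: "d \<ge> 1 \<and> 0 \<le> \<zeta> \<and> \<zeta> < z \<and> rbcbo_setting N d P \<zeta> M \<omega> X0 B \<eta>"
    have ps: "prob_space M" using H unfolding rbcbo_setting_def by blast
    interpret r: rbs2 M N d P \<gamma> \<zeta> \<omega> X0 B \<eta> m0 Pt z
    proof (intro rbs2.intro rbs.intro rbs2_axioms.intro rbs_axioms.intro ps)
      show "rbcbo_setting N d P \<zeta> M \<omega> X0 B \<eta>" using H by blast
      show "0 \<le> \<zeta>" "\<zeta> \<le> z" using H by auto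
    qed (use N2 g0 g1 m0 Pt cover zpos zA zB zC in auto)
    have d1: "d \<ge> 1" using H by blast
    show "let X = cbo_path N d \<gamma> \<omega> X0 B \<eta> in
      \<exists>xinf :: 'a \<Rightarrow> nat \<Rightarrow> real.
        (\<forall>l\<in>{1..d}. (\<lambda>w. xinf w l) \<in> borel_measurable M)
      \<and> (\<exists>C1 > 0. \<exists>\<Lambda>1 > 0.
          (\<forall>n. \<forall>l\<in>{1..d}.
             (\<integral>\<^sup>+ w. ennreal (diam_coord N (X w n) l) \<partial>M)
               \<le> ennreal (C1 * exp (- \<Lambda>1 * real n)) * (\<integral>\<^sup>+ w. ennreal (diam_coord N (X w 0) l) \<partial>M))
        \<and> (\<forall>n. \<forall>i\<in>{1..N}.
             (\<integral>\<^sup>+ w. ennreal (dist1 d (X w n) i (xinf w)) \<partial>M)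
               \<le> ennreal (real d * (\<gamma> + sqrt (real N) * \<zeta>) * C1 / (1 - exp (- \<Lambda>1))
                          * exp (- \<Lambda>1 * real n))
                 * (MAX l\<in>{1..d}. \<integral>\<^sup>+ w. ennreal (diam_coord N (X w 0) l) \<partial>M)))
      \<and> (\<exists>\<Lambda>2 > 0. \<exists>C3 :: 'a \<Rightarrow> real.
          C3 \<in> borel_measurable M \<and> (\<forall>w\<in>space M. C3 w > 0)
        \<and> (AE w in M. \<forall>n. \<forall>i\<in>{1..N}.
             dist1 d (X w n) i (xinf w) \<le> C3 w * exp (- \<Lambda>2 * real n)))"
      unfolding Let_def
    proof (intro exI conjI)
      show "\<forall>l\<in>{1..d}. (\<lambda>w. r.xinf w l) \<in> borel_measurable M" using r.xinf_meas by blast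
      show "0 < r.C1" by (rule r.C1_pos)
      show "0 < r.\<Lambda>" by (rule r.Lam_pos)
      show "\<forall>n. \<forall>l\<in>{1..d}. (\<integral>\<^sup>+ w. ennreal (diam_coord N (cbo_path N d \<gamma> \<omega> X0 B \<eta> w n) l) \<partial>M)
               \<le> ennreal (r.C1 * exp (- r.\<Lambda> * real n)) * (\<integral>\<^sup>+ w. ennreal (diam_coord N (cbo_path N d \<gamma> \<omega> X0 B \<eta> w 0) l) \<partial>M)"
        using r.claim1a by blast
      show "\<forall>n. \<forall>i\<in>{1..N}.
             (\<integral>\<^sup>+ w. ennreal (dist1 d (cbo_path N d \<gamma> \<omega> X0 B \<eta> w n) i (r.xinf w)) \<partial>M)
               \<le> ennreal (real d * (\<gamma> + sqrt (real N) * \<zeta>) * r.C1 / (1 - exp (- r.\<Lambda>))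
                          * exp (- r.\<Lambda> * real n))
                 * (MAX l\<in>{1..d}. \<integral>\<^sup>+ w. ennreal (diam_coord N (cbo_path N d \<gamma> \<omega> X0 B \<eta> w 0) l) \<partial>M)"
        using r.claim1b d1 by blast
      show "0 < r.\<Lambda>2" by (rule r.Lam2_pos)
      show "r.C3 \<in> borel_measurable M" by (rule r.C3_meas)
      show "\<forall>w\<in>space M. 0 < r.C3 w" using r.C3_pos by blast
      show "AE w in M. \<forall>n. \<forall>i\<in>{1..N}.
             dist1 d (cbo_path N d \<gamma> \<omega> X0 B \<eta> w n) i (r.xinf w) \<le> r.C3 w * exp (- r.\<Lambda>2 * real n)"
        using r.AE_FF
      proof (rule AE_mp, intro AE_I2 impI allI ballI)
        fix w n i assume w: "w \<in> space M" and F: "r.FF w \<noteq> \<top>" and i: "i \<in> {1..N}"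
        show "dist1 d (cbo_path N d \<gamma> \<omega> X0 B \<eta> w n) i (r.xinf w) \<le> r.C3 w * exp (- r.\<Lambda>2 * real n)"
          using r.claim2_pt[OF w F i, of n] by (simp add: r.Xt_def)
      qed
    qed
  qed
qed


end
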